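(* Let $E$ be a locally complete lcHs, $G\subset E'$ a linear subspace that determines boundedness, $\Omega\subset\mathbb{R}^d$ open, $k\in\mathbb{N}_0$ and $0<\gamma\le1$. (a) If $f\colon\Omega\to E$ is such that $e'\circ f\in\mathcal{C}^{k,\gamma}_{loc}(\Omega)$ for all $e'\in G$, then $f\in\mathcal{C}^{k,\gamma}_{loc}(\Omega,E)$. (b) If $f\colon\Omega\to E$ is such that $e'\circ f\in\mathcal{C}^{k+1}(\Omega)$ for all $e'\in G$, then $f\in\mathcal{C}^{k,1}_{loc}(\Omega,E)$.
   Context: $\mathbb{K}\in\{\mathbb{R},\mathbb{C}\}$; "lcHs" means locally convex Hausdorff space over $\mathbb{K}$ with directed fundamental system of seminorms $(p_\alpha)_{\alpha\in\mathfrak{A}}$. $E$ is locally complete if for every closed bounded absolutely convex $D\subset E$ the space $\bigcup_n nD$ normed by the gauge of $D$ is Banach. $G\subset E'$ determines boundedness if every $\sigma(E,G)$-bounded subset of $E$ is bounded in $E$. $\mathcal{C}^k(\Omega,E)$ denotes $k$-times continuously partially differentiable functions (partial derivatives $(\partial^\beta)^E$ as limits of difference quotients in $E$). $\mathcal{C}^{k,\gamma}_{loc}(\Omega,E)$ is the space of $f\in\mathcal{C}^k(\Omega,E)$ such that for every compact $K\subset\Omega$ and $\alpha\in\mathfrak{A}$: $\sup_{x\in K,|\beta|\le k}p_\alpha((\partial^\beta)^Ef(x))<\infty$ and $\sup_{|\beta|=k}\sup_{x\ne y\in K}\frac{p_\alpha((\partial^\beta)^Ef(x)-(\partial^\beta)^Ef(y))}{|x-y|^\gamma}<\infty$.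 For $E=\mathbb{K}$ the $E$ is omitted. *)

theory Defs
  imports "HOL-Analysis.Analysis"
begin

text \<open>
  Locally convex Hausdorff spaces over a scalar field 'k (a real normed field, i.e. R or C up
  to isomorphism), given by a vector space structure smul on 'e and a family of seminorms
  P :: 'a => 'e => real indexed by 'a (the fundamental system).
\<close>

definition seminorm :: "('k::real_normed_field \<Rightarrow> 'e::ab_group_add \<Rightarrow> 'e) \<Rightarrow> ('e \<Rightarrow> real) \<Rightarrow> bool" where
  "seminorm smul p \<longleftrightarrow> (\<forall>x y. p (x + y) \<le> p x + p y) \<and> (\<forall>c x. p (smul c x) = norm c * p x)"

definition lcHs :: "('k::real_normed_field \<Rightarrow> 'e::ab_group_add \<Rightarrow> 'e) \<Rightarrow> ('a \<Rightarrow> 'e \<Rightarrow> real) \<Rightarrow> bool" where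
  "lcHs smul P \<longleftrightarrow> vector_space smul \<and> (\<forall>a. seminorm smul (P a))
     \<and> (\<forall>a b. \<exists>c C. \<forall>x. max (P a x) (P b x) \<le> C * P c x)
     \<and> (\<forall>x. (\<forall>a. P a x = 0) \<longrightarrow> x = 0)"

definition lc_bounded :: "('a \<Rightarrow> 'e \<Rightarrow> real) \<Rightarrow> 'e set \<Rightarrow> bool" where
  "lc_bounded P B \<longleftrightarrow> (\<forall>a. \<exists>C. \<forall>x\<in>B. P a x \<le> C)"

definition lc_closed :: "('a \<Rightarrow> 'e::ab_group_add \<Rightarrow> real) \<Rightarrow> 'e set \<Rightarrow> bool" where
  "lc_closed P D \<longleftrightarrow> (\<forall>x. (\<forall>a. \<forall>\<epsilon>>0. \<exists>y\<in>D. P a (x - y) < \<epsilon>) \<longrightarrow> x \<in> D)"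

definition abs_convex :: "('k::real_normed_field \<Rightarrow> 'e::ab_group_add \<Rightarrow> 'e) \<Rightarrow> 'e set \<Rightarrow> bool" where
  "abs_convex smul D \<longleftrightarrow>
     (\<forall>x\<in>D. \<forall>y\<in>D. \<forall>c d. norm c + norm d \<le> 1 \<longrightarrow> smul c x + smul d y \<in> D)"

text \<open>The normed space E_D = union of n D, with the gauge (Minkowski functional) of D.\<close>

definition span_set :: "('k::real_normed_field \<Rightarrow> 'e::ab_group_add \<Rightarrow> 'e) \<Rightarrow> 'e set \<Rightarrow> 'e set" where
  "span_set smul D = {x. \<exists>n::nat. \<exists>y\<in>D. x = smul (of_nat n) y}"

definition gauge_fun :: "('k::real_normed_field \<Rightarrow> 'e::ab_group_add \<Rightarrow> 'e) \<Rightarrow> 'e set \<Rightarrow> 'e \<Rightarrow> real" where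
  "gauge_fun smul D x = Inf {t::real. t > 0 \<and> (\<exists>y\<in>D. x = smul (of_real t) y)}"

definition locally_complete :: "('k::real_normed_field \<Rightarrow> 'e::ab_group_add \<Rightarrow> 'e) \<Rightarrow> ('a \<Rightarrow> 'e \<Rightarrow> real) \<Rightarrow> bool" where
  "locally_complete smul P \<longleftrightarrow>
     (\<forall>D. lc_closed P D \<and> lc_bounded P D \<and> abs_convex smul D \<and> D \<noteq> {} \<longrightarrow>
        (\<forall>s. (\<forall>n. s n \<in> span_set smul D) \<longrightarrow>
             (\<forall>\<epsilon>>0. \<exists>N. \<forall>m\<ge>N. \<forall>n\<ge>N. gauge_fun smul D (s m - s n) < \<epsilon>) \<longrightarrow>
             (\<exists>x\<in>span_set smul D. (\<lambda>n. gauge_fun smul D (s n - x)) \<longlonglongrightarrow> 0)))"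

definition lc_dual :: "('k::real_normed_field \<Rightarrow> 'e::ab_group_add \<Rightarrow> 'e) \<Rightarrow> ('a \<Rightarrow> 'e \<Rightarrow> real) \<Rightarrow> ('e \<Rightarrow> 'k) set" where
  "lc_dual smul P = {l. (\<forall>x y. l (x + y) = l x + l y) \<and> (\<forall>c x. l (smul c x) = c * l x)
                       \<and> (\<exists>a C. \<forall>x. norm (l x) \<le> C * P a x)}"

definition linear_subspace_fun :: "('e \<Rightarrow> 'k::real_normed_field) set \<Rightarrow> bool" where
  "linear_subspace_fun G \<longleftrightarrow> (\<lambda>_. 0) \<in> G \<and> (\<forall>l\<in>G. \<forall>m\<in>G. (\<lambda>x. l x + m x) \<in> G)
      \<and> (\<forall>l\<in>G. \<forall>c. (\<lambda>x. c * l x) \<in> G)"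

definition determines_boundedness :: "('a \<Rightarrow> 'e \<Rightarrow> real) \<Rightarrow> ('e \<Rightarrow> 'k::real_normed_field) set \<Rightarrow> bool" where
  "determines_boundedness P G \<longleftrightarrow>
     (\<forall>B. (\<forall>l\<in>G. \<exists>C. \<forall>x\<in>B. norm (l x) \<le> C) \<longrightarrow> lc_bounded P B)"

definition mi_order :: "('n::finite \<Rightarrow> nat) \<Rightarrow> nat" where
  "mi_order \<beta> = (\<Sum>i\<in>UNIV. \<beta> i)"

definition has_partial :: "('k::real_normed_field \<Rightarrow> 'e::ab_group_add \<Rightarrow> 'e) \<Rightarrow> ('a \<Rightarrow> 'e \<Rightarrow> real)
    \<Rightarrow> (real^'n \<Rightarrow> 'e) \<Rightarrow> 'n \<Rightarrow> real^'n \<Rightarrow> 'e \<Rightarrow> bool" where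
  "has_partial smul P f i x v \<longleftrightarrow>
     (\<forall>a. ((\<lambda>h. P a (smul (of_real (1 / h)) (f (x + h *\<^sub>R axis i 1) - f x) - v)) \<longlongrightarrow> 0) (at 0))"

definition lc_continuous_on :: "('a \<Rightarrow> 'e::ab_group_add \<Rightarrow> real) \<Rightarrow> (real^'n) set \<Rightarrow> (real^'n \<Rightarrow> 'e) \<Rightarrow> bool" where
  "lc_continuous_on P \<Omega> f \<longleftrightarrow>
     (\<forall>x\<in>\<Omega>. \<forall>a. ((\<lambda>y. P a (f y - f x)) \<longlongrightarrow> 0) (at x within \<Omega>))"

definition deriv_system :: "('k::real_normed_field \<Rightarrow> 'e::ab_group_add \<Rightarrow> 'e) \<Rightarrow> ('a \<Rightarrow> 'e \<Rightarrow> real)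
    \<Rightarrow> (real^'n::finite) set \<Rightarrow> nat \<Rightarrow> (real^'n \<Rightarrow> 'e) \<Rightarrow> (('n \<Rightarrow> nat) \<Rightarrow> real^'n \<Rightarrow> 'e) \<Rightarrow> bool" where
  "deriv_system smul P \<Omega> k f D \<longleftrightarrow>
     (\<forall>x\<in>\<Omega>. D (\<lambda>_. 0) x = f x)
     \<and> (\<forall>\<beta> i. mi_order \<beta> < k \<longrightarrow> (\<forall>x\<in>\<Omega>. has_partial smul P (D \<beta>) i x (D (\<beta>(i := Suc (\<beta> i))) x)))
     \<and> (\<forall>\<beta>. mi_order \<beta> \<le> k \<longrightarrow> lc_continuous_on P \<Omega> (D \<beta>))"

definition Ck :: "('k::real_normed_field \<Rightarrow> 'e::ab_group_add \<Rightarrow> 'e) \<Rightarrow> ('a \<Rightarrow> 'e \<Rightarrow> real)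
    \<Rightarrow> (real^'n::finite) set \<Rightarrow> nat \<Rightarrow> (real^'n \<Rightarrow> 'e) \<Rightarrow> bool" where
  "Ck smul P \<Omega> k f \<longleftrightarrow> (\<exists>D. deriv_system smul P \<Omega> k f D)"

definition Ck_gamma_loc :: "('k::real_normed_field \<Rightarrow> 'e::ab_group_add \<Rightarrow> 'e) \<Rightarrow> ('a \<Rightarrow> 'e \<Rightarrow> real)
    \<Rightarrow> (real^'n::finite) set \<Rightarrow> nat \<Rightarrow> real \<Rightarrow> (real^'n \<Rightarrow> 'e) \<Rightarrow> bool" where
  "Ck_gamma_loc smul P \<Omega> k \<gamma> f \<longleftrightarrow> (\<exists>D. deriv_system smul P \<Omega> k f D \<and>
     (\<forall>K. compact K \<and> K \<subseteq> \<Omega> \<longrightarrow> (\<forall>a.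
        (\<exists>C. \<forall>x\<in>K. \<forall>\<beta>. mi_order \<beta> \<le> k \<longrightarrow> P a (D \<beta> x) \<le> C)
      \<and> (\<exists>C. \<forall>\<beta>. mi_order \<beta> = k \<longrightarrow> (\<forall>x\<in>K. \<forall>y\<in>K. x \<noteq> y \<longrightarrow>
            P a (D \<beta> x - D \<beta> y) \<le> C * norm (x - y) powr \<gamma>)))))"

abbreviation Ck_scalar :: "(real^'n::finite) set \<Rightarrow> nat \<Rightarrow> (real^'n \<Rightarrow> 'k::real_normed_field) \<Rightarrow> bool" where
  "Ck_scalar \<Omega> k g \<equiv> Ck (*) (\<lambda>_::unit. norm) \<Omega> k g"

abbreviation Ck_gamma_loc_scalar :: "(real^'n::finite) set \<Rightarrow> nat \<Rightarrow> real \<Rightarrow> (real^'n \<Rightarrow> 'k::real_normed_field) \<Rightarrow> bool" where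
  "Ck_gamma_loc_scalar \<Omega> k \<gamma> g \<equiv> Ck_gamma_loc (*) (\<lambda>_::unit. norm) \<Omega> k \<gamma> g"

end

theory Submission
  imports Defs
begin

lemma scalar_cont_iff:
  "lc_continuous_on (\<lambda>_::unit. norm) \<Omega> (g :: real^'n::finite \<Rightarrow> 'k::real_normed_field) \<longleftrightarrow> continuous_on \<Omega> g"
  unfolding lc_continuous_on_def continuous_on_def
  by (simp add: tendsto_norm_zero_iff LIM_zero_iff)

lemma hp_vd:
  fixes g :: "real^'n::finite \<Rightarrow> 'k::real_normed_field"
  assumes "has_partial (*) (\<lambda>_::unit. norm) g i (x + t0 *\<^sub>R axis i 1) v"
  shows "((\<lambda>t. g (x + t *\<^sub>R axis i 1)) has_vector_derivative v) (at t0)"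
proof -
  let ?y = "x + t0 *\<^sub>R axis i 1"
  have L: "((\<lambda>h. norm (of_real (1/h) * (g (?y + h *\<^sub>R axis i 1) - g ?y) - v)) \<longlongrightarrow> 0) (at 0)"
    using assms unfolding has_partial_def by simp
  have eq: "norm (g (x + (t0 + h) *\<^sub>R axis i 1) - g (x + t0 *\<^sub>R axis i 1) - h *\<^sub>R v) / norm h
        = norm (of_real (1/h) * (g (?y + h *\<^sub>R axis i 1) - g ?y) - v)" if "h \<noteq> 0" for h :: real
  proof -
    have a: "x + (t0 + h) *\<^sub>R axis i 1 = ?y + h *\<^sub>R axis i 1" by (simp add: scaleR_add_left algebra_simps)
    have "norm (g (?y + h *\<^sub>R axis i 1) - g ?y - h *\<^sub>R v) / norm h
        = norm ((1/h) *\<^sub>R (g (?y + h *\<^sub>R axis i 1) - g ?y - h *\<^sub>R v))"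
      using that by (simp add: divide_inverse mult.commute)
    also have "(1/h) *\<^sub>R (g (?y + h *\<^sub>R axis i 1) - g ?y - h *\<^sub>R v)
       = (1/h) *\<^sub>R (g (?y + h *\<^sub>R axis i 1) - g ?y) - v"
      using that by (simp add: scaleR_diff_right)
    also have "\<dots> = of_real (1/h) * (g (?y + h *\<^sub>R axis i 1) - g ?y) - v"
      by (simp add: scaleR_conv_of_real)
    finally have "norm (g (?y + h *\<^sub>R axis i 1) - g ?y - h *\<^sub>R v) / norm h
        = norm (of_real (1/h) * (g (?y + h *\<^sub>R axis i 1) - g ?y) - v)" .
    then show ?thesis by (simp only: a)
  qed
  have ev: "eventually (\<lambda>h. norm (of_real (1/h) * (g (?y + h *\<^sub>R axis i 1) - g ?y) - v) =
      norm (g (x + (t0 + h) *\<^sub>R axis i 1) - g (x + t0 *\<^sub>R axis i 1) - h *\<^sub>R v) / norm h) (at (0::real))"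
    using eq by (auto simp: eventually_at_filter)
  have "((\<lambda>h. norm (g (x + (t0 + h) *\<^sub>R axis i 1) - g (x + t0 *\<^sub>R axis i 1) - h *\<^sub>R v) / norm h) \<longlongrightarrow> 0) (at 0)"
    using tendsto_cong[OF ev] L by simp
  then show ?thesis unfolding has_vector_derivative_def has_derivative_at
    by (simp add: bounded_linear_scaleR_left)
qed

lemma seg_est:
  fixes g gd :: "real^'n::finite \<Rightarrow> 'k::real_normed_field"
  assumes hp: "\<And>t. \<bar>t\<bar> \<le> \<bar>h\<bar> \<Longrightarrow> has_partial (*) (\<lambda>_::unit. norm) g i (x + t *\<^sub>R axis i 1) (gd (x + t *\<^sub>R axis i 1))"
    and H: "\<And>t. \<bar>t\<bar> \<le> \<bar>h\<bar> \<Longrightarrow> norm (gd (x + t *\<^sub>R axis i 1) - gd x) \<le> C * \<bar>t\<bar> powr \<gamma>"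
    and "h \<noteq> 0" "0 \<le> C" "0 \<le> \<gamma>"
  shows "norm (of_real (1/h) * (g (x + h *\<^sub>R axis i 1) - g x) - gd x) \<le> C * \<bar>h\<bar> powr \<gamma>"
proof -
  let ?S = "closed_segment 0 h"
  have Sb: "\<bar>t\<bar> \<le> \<bar>h\<bar>" if "t \<in> ?S" for t :: real
    using that by (auto simp: closed_segment_eq_real_ivl split: if_splits)
  have vd: "((\<lambda>t. g (x + t *\<^sub>R axis i 1)) has_vector_derivative gd (x + t *\<^sub>R axis i 1)) (at t within ?S)"
    if "t \<in> ?S" for t
    using hp_vd[OF hp[OF Sb[OF that]]] by (rule has_vector_derivative_at_within)
  have B: "norm (gd (x + t *\<^sub>R axis i 1) - gd (x + 0 *\<^sub>R axis i 1)) \<le> C * \<bar>h\<bar> powr \<gamma>" if "t \<in> ?S" for t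
  proof -
    have "norm (gd (x + t *\<^sub>R axis i 1) - gd x) \<le> C * \<bar>t\<bar> powr \<gamma>" using H Sb that by blast
    also have "\<dots> \<le> C * \<bar>h\<bar> powr \<gamma>"
      using Sb[OF that] assms by (intro mult_left_mono powr_mono2) auto
    finally show ?thesis by simp
  qed
  have "norm (g (x + h *\<^sub>R axis i 1) - g (x + 0 *\<^sub>R axis i 1) - (h - 0) *\<^sub>R gd (x + 0 *\<^sub>R axis i 1))
      \<le> norm (h - 0) * (C * \<bar>h\<bar> powr \<gamma>)"
    by (rule vector_differentiable_bound_linearization[where f="\<lambda>t. g (x + t *\<^sub>R axis i 1)"
          and f'="\<lambda>t. gd (x + t *\<^sub>R axis i 1)" and S="?S"])
       (use vd B in auto)
  then have *: "norm (g (x + h *\<^sub>R axis i 1) - g x - h *\<^sub>R gd x) \<le> \<bar>h\<bar> * (C * \<bar>h\<bar> powr \<gamma>)" by simp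
  have e1: "(1/h) *\<^sub>R (g (x + h *\<^sub>R axis i 1) - g x - h *\<^sub>R gd x) = (1/h) *\<^sub>R (g (x + h *\<^sub>R axis i 1) - g x) - gd x"
    using \<open>h \<noteq> 0\<close> by (simp add: scaleR_diff_right)
  have e2: "(1/h) *\<^sub>R (g (x + h *\<^sub>R axis i 1) - g x) = of_real (1/h) * (g (x + h *\<^sub>R axis i 1) - g x)"
    by (rule scaleR_conv_of_real)
  have "norm (of_real (1/h) * (g (x + h *\<^sub>R axis i 1) - g x) - gd x)
      = norm ((1/h) *\<^sub>R (g (x + h *\<^sub>R axis i 1) - g x - h *\<^sub>R gd x))"
    by (simp only: e1 e2)
  also have "\<dots> = norm (g (x + h *\<^sub>R axis i 1) - g x - h *\<^sub>R gd x) / \<bar>h\<bar>"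
    by (simp add: divide_inverse mult.commute)
  also have "\<dots> \<le> C * \<bar>h\<bar> powr \<gamma>"
    using * \<open>h \<noteq> 0\<close> by (simp add: divide_le_eq mult.commute)
  finally show ?thesis .
qed

lemma lip_to_hoelder:
  fixes d R \<gamma> :: real
  assumes "0 \<le> d" "d \<le> R" "0 < \<gamma>" "\<gamma> \<le> 1"
  shows "d \<le> R powr (1-\<gamma>) * d powr \<gamma>"
proof (cases "d = 0")
  case True then show ?thesis by simp
next
  case False
  then have dp: "0 < d" using assms by simp
  have "d = d powr ((1-\<gamma>) + \<gamma>)" using dp by simp
  also have "\<dots> = d powr (1-\<gamma>) * d powr \<gamma>" by (rule powr_add)
  also have "\<dots> \<le> R powr (1-\<gamma>) * d powr \<gamma>"
    using assms dp by (intro mult_right_mono powr_mono2) auto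
  finally show ?thesis .
qed

lemma mi_order_upd:
  fixes \<beta> :: "'n::finite \<Rightarrow> nat"
  shows "mi_order (\<beta>(i := m)) + \<beta> i = mi_order \<beta> + m"
proof -
  have r: "mi_order \<delta> = \<delta> i + (\<Sum>j\<in>UNIV-{i}. \<delta> j)" for \<delta> :: "'n \<Rightarrow> nat"
    unfolding mi_order_def by (rule sum.remove) auto
  have "(\<Sum>j\<in>UNIV-{i}. (\<beta>(i := m)) j) = (\<Sum>j\<in>UNIV-{i}. \<beta> j)"
    by (rule sum.cong) auto
  then show ?thesis using r[of \<beta>] r[of "\<beta>(i := m)"] by simp
qed

lemma mi_order_ge: "\<beta> i \<le> mi_order (\<beta> :: 'n::finite \<Rightarrow> nat)"
  unfolding mi_order_def by (rule member_le_sum) auto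

lemma finite_mi: "finite {\<beta> :: 'n::finite \<Rightarrow> nat. mi_order \<beta> \<le> k}"
proof -
  have "{\<beta> :: 'n \<Rightarrow> nat. mi_order \<beta> \<le> k} \<subseteq> Pi\<^sub>E UNIV (\<lambda>_. {..k})"
    using mi_order_ge order_trans by (fastforce simp: PiE_def extensional_def Pi_def)
  moreover have "finite (Pi\<^sub>E (UNIV::'n set) (\<lambda>_. {..k}))" by (rule finite_PiE) auto
  ultimately show ?thesis by (rule finite_subset)
qed

lemma finite_unif:
  fixes Q :: "'b \<Rightarrow> 'j \<Rightarrow> real"
  assumes "finite S" "\<And>\<beta>. \<beta> \<in> S \<Longrightarrow> \<exists>C. \<forall>j\<in>J. Q \<beta> j \<le> C * w j" "\<And>j. j \<in> J \<Longrightarrow> 0 \<le> w j"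
  shows "\<exists>C. \<forall>\<beta>\<in>S. \<forall>j\<in>J. Q \<beta> j \<le> C * w j"
proof -
  obtain C where C: "\<And>\<beta>. \<beta> \<in> S \<Longrightarrow> \<forall>j\<in>J. Q \<beta> j \<le> C \<beta> * w j"
    using assms(2) by metis
  have "Q \<beta> j \<le> (\<Sum>b\<in>S. \<bar>C b\<bar>) * w j" if "\<beta> \<in> S" "j \<in> J" for \<beta> j
  proof -
    have "Q \<beta> j \<le> C \<beta> * w j" using C that by blast
    also have "\<dots> \<le> \<bar>C \<beta>\<bar> * w j" using assms(3)[OF that(2)] by (intro mult_right_mono) auto
    also have "\<dots> \<le> (\<Sum>b\<in>S. \<bar>C b\<bar>) * w j"
      using assms(3)[OF that(2)] that assms(1)
      by (intro mult_right_mono member_le_sum[where f="\<lambda>b. \<bar>C b\<bar>"]) auto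
    finally show ?thesis .
  qed
  then show ?thesis by blast
qed

lemma box_lip:
  fixes g :: "real^'n::finite \<Rightarrow> 'k::real_normed_field" and gd :: "'n \<Rightarrow> real^'n \<Rightarrow> 'k"
  assumes hp: "\<And>i z. z \<in> cball x r \<Longrightarrow> has_partial (*) (\<lambda>_::unit. norm) g i z (gd i z)"
    and M: "\<And>i z. z \<in> cball x r \<Longrightarrow> norm (gd i z) \<le> M"
    and y: "norm (y - x) \<le> r"
  shows "norm (g y - g x) \<le> (3 * M * real CARD('n)) * norm (y - x)"
proof -
  define z where "z S = (\<chi> j. if j \<in> S then y$j else x$j)" for S :: "'n set"
  have xin: "x \<in> cball x r" using y order_trans[OF norm_ge_zero y] by simp
  have M0: "0 \<le> M" using order_trans[OF norm_ge_zero M[OF xin]] .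
  have main: "norm (g (z S) - g x) \<le> 3 * M * real (card S) * norm (y - x)" for S
  proof -
    have "finite S" by simp
    then show ?thesis
    proof (induction S rule: finite_induct)
      case empty
      have "z {} = x" by (simp add: z_def vec_eq_iff)
      then show ?case by simp
    next
      case (insert i S)
      define c where "c = y$i - x$i"
      have zi: "z (insert i S) = z S + c *\<^sub>R axis i 1"
        using insert.hyps(2) by (auto simp: z_def vec_eq_iff axis_def c_def)
      have inb: "z S + t *\<^sub>R axis i 1 \<in> cball x r" if "\<bar>t\<bar> \<le> \<bar>c\<bar>" for t
      proof -
        have "norm (z S + t *\<^sub>R axis i 1 - x) \<le> norm (y - x)"
          by (rule norm_le_componentwise_cart)
             (use that insert.hyps(2) in \<open>auto simp: z_def axis_def c_def\<close>)
        then show ?thesis using y by (simp add: dist_norm norm_minus_commute)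
      qed
      let ?S = "closed_segment 0 c"
      have Sb: "\<bar>t\<bar> \<le> \<bar>c\<bar>" if "t \<in> ?S" for t :: real
        using that by (auto simp: closed_segment_eq_real_ivl split: if_splits)
      have vd: "((\<lambda>t. g (z S + t *\<^sub>R axis i 1)) has_vector_derivative gd i (z S + t *\<^sub>R axis i 1)) (at t within ?S)"
        if "t \<in> ?S" for t
        using hp_vd[OF hp[OF inb[OF Sb[OF that]]]] by (rule has_vector_derivative_at_within)
      have B: "norm (gd i (z S + t *\<^sub>R axis i 1) - gd i (z S + 0 *\<^sub>R axis i 1)) \<le> 2 * M" if "t \<in> ?S" for t
      proof -
        have "norm (gd i (z S + t *\<^sub>R axis i 1) - gd i (z S + 0 *\<^sub>R axis i 1))
           \<le> norm (gd i (z S + t *\<^sub>R axis i 1)) + norm (gd i (z S + 0 *\<^sub>R axis i 1))"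
          by (rule norm_triangle_ineq4)
        also have "\<dots> \<le> M + M"
          using M[OF inb[OF Sb[OF that]]] M[OF inb[of 0]] by (intro add_mono) auto
        finally show ?thesis by simp
      qed
      have "norm (g (z S + c *\<^sub>R axis i 1) - g (z S + 0 *\<^sub>R axis i 1) - (c - 0) *\<^sub>R gd i (z S + 0 *\<^sub>R axis i 1))
          \<le> norm (c - 0) * (2 * M)"
        by (rule vector_differentiable_bound_linearization[where f="\<lambda>t. g (z S + t *\<^sub>R axis i 1)"
              and f'="\<lambda>t. gd i (z S + t *\<^sub>R axis i 1)" and S="?S"])
           (use vd B in auto)
      then have *: "norm (g (z (insert i S)) - g (z S) - c *\<^sub>R gd i (z S)) \<le> \<bar>c\<bar> * (2 * M)"
        by (simp add: zi)
      have gz: "norm (gd i (z S)) \<le> M" using M[OF inb[of 0]] by simp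
      have "norm (g (z (insert i S)) - g (z S)) \<le> norm (g (z (insert i S)) - g (z S) - c *\<^sub>R gd i (z S)) + norm (c *\<^sub>R gd i (z S))"
        using norm_triangle_ineq[of "g (z (insert i S)) - g (z S) - c *\<^sub>R gd i (z S)" "c *\<^sub>R gd i (z S)"] by simp
      also have "\<dots> \<le> \<bar>c\<bar> * (2 * M) + \<bar>c\<bar> * M"
        using * gz by (intro add_mono) (auto intro: mult_left_mono)
      also have "\<dots> = 3 * M * \<bar>c\<bar>" by simp
      also have "\<dots> \<le> 3 * M * norm (y - x)"
        using M0 component_le_norm_cart[of "y - x" i] by (intro mult_left_mono) (auto simp: c_def)
      finally have st: "norm (g (z (insert i S)) - g (z S)) \<le> 3 * M * norm (y - x)" .
      have "norm (g (z (insert i S)) - g x) \<le> norm (g (z (insert i S)) - g (z S)) + norm (g (z S) - g x)"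
        using norm_triangle_ineq[of "g (z (insert i S)) - g (z S)" "g (z S) - g x"] by simp
      also have "\<dots> \<le> 3 * M * norm (y - x) + 3 * M * real (card S) * norm (y - x)"
        using st insert.IH by (rule add_mono)
      also have "\<dots> = 3 * M * real (card (insert i S)) * norm (y - x)"
        using insert.hyps by (simp add: algebra_simps)
      finally show ?case .
    qed
  qed
  have "z UNIV = y" by (simp add: z_def vec_eq_iff)
  then show ?thesis using main[of UNIV] by (simp add: mult.assoc)
qed

lemma lip_compact:
  fixes g :: "real^'n::finite \<Rightarrow> 'k::real_normed_field" and gd :: "'n \<Rightarrow> real^'n \<Rightarrow> 'k"
  assumes "open \<Omega>" "compact K" "K \<subseteq> \<Omega>"
   and hp: "\<And>i z. z \<in> \<Omega> \<Longrightarrow> has_partial (*) (\<lambda>_::unit. norm) g i z (gd i z)"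
   and cd: "\<And>i. continuous_on \<Omega> (gd i)" and cg: "continuous_on \<Omega> g"
  shows "\<exists>L\<ge>0. \<forall>x\<in>K. \<forall>y\<in>K. norm (g x - g y) \<le> L * norm (x - y)"
proof -
  obtain e where e: "e > 0" "(\<Union>x\<in>K. cball x e) \<subseteq> \<Omega>"
    using compact_subset_open_imp_cball_epsilon_subset[OF assms(2,1,3)] by blast
  define K' where "K' = {a + b | a b. a \<in> K \<and> b \<in> cball 0 e}"
  have cK': "compact K'" unfolding K'_def by (intro compact_sums assms(2) compact_cball)
  have K'sub: "K' \<subseteq> \<Omega>"
  proof
    fix w assume "w \<in> K'"
    then obtain a b where "w = a + b" "a \<in> K" "b \<in> cball 0 e" unfolding K'_def by blast
    then have "w \<in> cball a e" by (simp add: dist_norm)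
    then show "w \<in> \<Omega>" using e \<open>a \<in> K\<close> by blast
  qed
  have cbK': "cball x e \<subseteq> K'" if "x \<in> K" for x
  proof
    fix w assume "w \<in> cball x e"
    then have "w = x + (w - x)" "w - x \<in> cball 0 e" by (auto simp: dist_norm norm_minus_commute)
    then show "w \<in> K'" using that unfolding K'_def by blast
  qed
  have "compact ((\<lambda>z. \<Sum>i\<in>UNIV. norm (gd i z)) ` K')"
    by (rule compact_continuous_image[OF _ cK'])
       (intro continuous_on_sum continuous_on_norm continuous_on_subset[OF cd K'sub])
  then obtain M where M: "\<And>w. w \<in> (\<lambda>z. \<Sum>i\<in>UNIV. norm (gd i z)) ` K' \<Longrightarrow> norm w \<le> M"
    using compact_imp_bounded bounded_iff by metis
  have Mb: "norm (gd i z) \<le> max M 0" if "z \<in> K'" for i z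
  proof -
    have "norm (gd i z) \<le> (\<Sum>j\<in>UNIV. norm (gd j z))" by (rule member_le_sum) auto
    also have "\<dots> \<le> M" using M[of "\<Sum>j\<in>UNIV. norm (gd j z)"] that by auto
    finally show ?thesis by simp
  qed
  have "compact (g ` K)"
    by (rule compact_continuous_image[OF continuous_on_subset[OF cg assms(3)] assms(2)])
  then obtain Bg where Bg: "\<And>w. w \<in> g ` K \<Longrightarrow> norm w \<le> Bg"
    using compact_imp_bounded bounded_iff by metis
  define L where "L = 3 * max M 0 * real CARD('n) + 2 * max Bg 0 / e"
  have L0: "0 \<le> L" unfolding L_def using e by auto
  have "norm (g x - g y) \<le> L * norm (x - y)" if xy: "x \<in> K" "y \<in> K" for x y
  proof (cases "norm (y - x) \<le> e")
    case True
    have "norm (g y - g x) \<le> (3 * max M 0 * real CARD('n)) * norm (y - x)"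
    proof (rule box_lip[OF _ _ True])
      fix i z assume "z \<in> cball x e"
      then show "has_partial (*) (\<lambda>_::unit. norm) g i z (gd i z)" using hp e xy by blast
      show "norm (gd i z) \<le> max M 0" using Mb cbK'[OF xy(1)] \<open>z \<in> cball x e\<close> by blast
    qed
    also have "\<dots> \<le> L * norm (y - x)"
      unfolding L_def using e by (intro mult_right_mono) auto
    finally show ?thesis by (simp add: norm_minus_commute)
  next
    case False
    have "norm (g x - g y) \<le> norm (g x) + norm (g y)" by (rule norm_triangle_ineq4)
    also have "\<dots> \<le> 2 * max Bg 0" using Bg[of "g x"] Bg[of "g y"] xy by auto
    also have "\<dots> = (2 * max Bg 0 / e) * e" using e by simp
    also have "\<dots> \<le> (2 * max Bg 0 / e) * norm (x - y)"
      using False e by (intro mult_left_mono) (auto simp: norm_minus_commute)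
    also have "\<dots> \<le> L * norm (x - y)"
      unfolding L_def by (intro mult_right_mono) auto
    finally show ?thesis .
  qed
  then show ?thesis using L0 by blast
qed

lemma hoelder_C1:
  fixes g :: "real^'n::finite \<Rightarrow> 'k::real_normed_field" and gd :: "'n \<Rightarrow> real^'n \<Rightarrow> 'k"
  assumes "open \<Omega>" "compact K" "K \<subseteq> \<Omega>"
   and hp: "\<And>i z. z \<in> \<Omega> \<Longrightarrow> has_partial (*) (\<lambda>_::unit. norm) g i z (gd i z)"
   and cd: "\<And>i. continuous_on \<Omega> (gd i)" and cg: "continuous_on \<Omega> g"
   and "0 < \<gamma>" "\<gamma> \<le> 1"
  shows "\<exists>C. \<forall>x\<in>K. \<forall>y\<in>K. norm (g x - g y) \<le> C * norm (x - y) powr \<gamma>"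
proof -
  obtain L where L: "L \<ge> 0" "\<And>x y. x\<in>K \<Longrightarrow> y\<in>K \<Longrightarrow> norm (g x - g y) \<le> L * norm (x - y)"
    using lip_compact[OF assms(1-6)] by blast
  obtain R where R: "\<And>x. x \<in> K \<Longrightarrow> norm x \<le> R"
    using compact_imp_bounded[OF assms(2)] bounded_iff by metis
  define R2 where "R2 = 2 * max R 0"
  have "norm (g x - g y) \<le> (L * R2 powr (1-\<gamma>)) * norm (x - y) powr \<gamma>" if "x\<in>K" "y\<in>K" for x y
  proof -
    have d: "norm (x - y) \<le> R2"
      using R[OF that(1)] R[OF that(2)] norm_triangle_ineq4[of x y] unfolding R2_def by auto
    have "norm (g x - g y) \<le> L * norm (x - y)" using L that by blast
    also have "\<dots> \<le> L * (R2 powr (1-\<gamma>) * norm (x - y) powr \<gamma>)"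
      using lip_to_hoelder[OF norm_ge_zero d assms(7,8)] L(1) by (rule mult_left_mono)
    finally show ?thesis by (simp add: mult.assoc)
  qed
  then show ?thesis by blast
qed

lemma bound_compact:
  fixes g :: "'x::topological_space \<Rightarrow> 'b::real_normed_vector"
  assumes "continuous_on \<Omega> g" "compact K" "K \<subseteq> \<Omega>"
  shows "\<exists>C. \<forall>x\<in>K. norm (g x) \<le> C"
proof -
  have "compact (g ` K)" by (rule compact_continuous_image[OF continuous_on_subset[OF assms(1,3)] assms(2)])
  then show ?thesis using compact_imp_bounded bounded_iff by (metis imageI)
qed



locale lcs =
  fixes smul :: "'k::real_normed_field \<Rightarrow> 'e::ab_group_add \<Rightarrow> 'e"
    and P :: "'a \<Rightarrow> 'e \<Rightarrow> real" and G :: "('e \<Rightarrow> 'k) set"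
  assumes lc: "lcHs smul P" and cpl: "locally_complete smul P"
    and dual: "G \<subseteq> lc_dual smul P" and db: "determines_boundedness P G"
begin

lemma vs: "vector_space smul" using lc unfolding lcHs_def by blast

sublocale V: vector_space smul by (rule vs)

lemma sn: "seminorm smul (P a)" using lc unfolding lcHs_def by blast
lemma P_add: "P a (x + y) \<le> P a x + P a y" using sn unfolding seminorm_def by blast
lemma P_smul: "P a (smul c x) = norm c * P a x" using sn unfolding seminorm_def by blast
lemma P_zero: "P a 0 = 0" using P_smul[of a 0 0] by simp
lemma P_neg: "P a (- x) = P a x" using P_smul[of a "-1" x] by simp
lemma P_nonneg: "0 \<le> P a x"
proof -
  have "P a 0 \<le> P a x + P a (- x)" using P_add[of a x "- x"] by simp
  then show ?thesis by (simp add: P_zero P_neg)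
qed
lemma P_tri: "P a (x - z) \<le> P a (x - y) + P a (y - z)"
  using P_add[of a "x - y" "y - z"] by simp
lemma P_sym: "P a (x - y) = P a (y - x)" using P_neg[of a "x - y"] by simp
lemma sep_P: "(\<And>a. P a x = 0) \<Longrightarrow> x = 0" using lc unfolding lcHs_def by blast

lemma l_add: "l \<in> G \<Longrightarrow> l (x + y) = l x + l y" using dual unfolding lc_dual_def by blast
lemma l_smul: "l \<in> G \<Longrightarrow> l (smul c x) = c * l x" using dual unfolding lc_dual_def by blast
lemma l_cont: "l \<in> G \<Longrightarrow> \<exists>b C. \<forall>x. norm (l x) \<le> C * P b x" using dual unfolding lc_dual_def by blast
lemma l_zero: "l \<in> G \<Longrightarrow> l 0 = 0" using l_smul[of l 0 0] by simp
lemma l_diff: "l \<in> G \<Longrightarrow> l (x - y) = l x - l y"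
proof -
  assume l: "l \<in> G"
  have "l x = l (x - y + y)" by simp
  also have "\<dots> = l (x - y) + l y" by (rule l_add[OF l])
  finally show ?thesis by simp
qed

lemma sepG:
  assumes "\<forall>l\<in>G. l x = 0" shows "x = 0"
proof (rule sep_P)
  fix a
  let ?B = "range (\<lambda>n::nat. smul (of_nat n) x)"
  have "\<forall>l\<in>G. \<forall>y\<in>?B. norm (l y) \<le> 0" using assms by (auto simp: l_smul)
  then have "\<forall>l\<in>G. \<exists>C. \<forall>y\<in>?B. norm (l y) \<le> C" by blast
  with db have "lc_bounded P ?B" unfolding determines_boundedness_def by blast
  then obtain C where C: "\<And>y. y \<in> ?B \<Longrightarrow> P a y \<le> C" unfolding lc_bounded_def by blast
  have nb: "real n * P a x \<le> C" for n
    using C[OF rangeI[of _ n]] by (simp add: P_smul)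
  show "P a x = 0"
  proof (rule ccontr)
    assume "P a x \<noteq> 0"
    then have "0 < P a x" using P_nonneg[of a x] by simp
    then obtain n where "C < real n * P a x" using reals_Archimedean3 by blast
    then show False using nb[of n] by simp
  qed
qed

lemma uniq: "\<forall>l\<in>G. l u = l w \<Longrightarrow> u = w"
  using sepG[of "u - w"] by (simp add: l_diff)

lemma weak_bound:
  assumes W: "\<And>l. l \<in> G \<Longrightarrow> \<exists>C. \<forall>j\<in>J. norm (l (u j)) \<le> C * \<rho> j"
    and r: "\<And>j. j \<in> J \<Longrightarrow> 0 \<le> \<rho> j"
  shows "\<exists>M. \<forall>j\<in>J. P a (u j) \<le> M * \<rho> j"
proof -
  define B where "B = (\<lambda>j. smul (of_real (1 / \<rho> j)) (u j)) ` {j\<in>J. 0 < \<rho> j}"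
  have "\<forall>l\<in>G. \<exists>C. \<forall>y\<in>B. norm (l y) \<le> C"
  proof
    fix l assume l: "l \<in> G"
    obtain C where C: "\<forall>j\<in>J. norm (l (u j)) \<le> C * \<rho> j" using W[OF l] by blast
    have "norm (l y) \<le> C" if yB: "y \<in> B" for y
    proof -
      obtain j where j: "j \<in> J" "0 < \<rho> j" "y = smul (of_real (1 / \<rho> j)) (u j)"
        using yB unfolding B_def by blast
      have "norm (l y) = norm (l (u j)) / \<rho> j"
        using j l by (simp add: l_smul norm_mult norm_divide)
      also have "\<dots> \<le> C" using C j by (simp add: pos_divide_le_eq)
      finally show ?thesis .
    qed
    then show "\<exists>C. \<forall>y\<in>B. norm (l y) \<le> C" by blast
  qed
  with db have "lc_bounded P B" unfolding determines_boundedness_def by blast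
  then obtain M where M: "\<And>y. y \<in> B \<Longrightarrow> P a y \<le> M" unfolding lc_bounded_def by blast
  have "P a (u j) \<le> M * \<rho> j" if j: "j \<in> J" for j
  proof (cases "\<rho> j = 0")
    case True
    have "\<forall>l\<in>G. l (u j) = 0"
    proof
      fix l assume l: "l \<in> G"
      obtain C where C: "\<forall>j\<in>J. norm (l (u j)) \<le> C * \<rho> j" using W[OF l] by blast
      then show "l (u j) = 0" using j True by auto
    qed
    then have "u j = 0" by (rule sepG)
    then show ?thesis using True by (simp add: P_zero)
  next
    case False
    then have pos: "0 < \<rho> j" using r[OF j] by simp
    have e: "smul (of_real (\<rho> j)) (smul (of_real (1 / \<rho> j)) (u j)) = u j"
      using pos by (simp flip: of_real_mult)
    have "P a (u j) = \<rho> j * P a (smul (of_real (1 / \<rho> j)) (u j))"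
      using pos by (subst e[symmetric]) (simp only: P_smul norm_of_real, simp)
    also have "\<dots> \<le> \<rho> j * M" using M[of "smul (of_real (1 / \<rho> j)) (u j)"] j pos
      unfolding B_def by (intro mult_left_mono) auto
    finally show ?thesis by (simp add: mult.commute)
  qed
  then show ?thesis by blast
qed

lemma complete_seq:
  fixes s :: "nat \<Rightarrow> 'e" and r :: "nat \<Rightarrow> real"
  assumes r0: "\<And>n. 0 \<le> r n" and rlim: "r \<longlonglongrightarrow> 0"
    and W: "\<And>l. l \<in> G \<Longrightarrow> \<exists>C. \<forall>m n. norm (l (s m) - l (s n)) \<le> C * (r m + r n)"
  shows "\<exists>v. \<forall>a. (\<lambda>n. P a (s n - v)) \<longlonglongrightarrow> 0"
proof -
  have "\<forall>l\<in>G. \<exists>C. 0 \<le> C \<and> (\<forall>m n. norm (l (s m) - l (s n)) \<le> C * (r m + r n))"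
  proof
    fix l assume "l \<in> G"
    then obtain C where C: "\<forall>m n. norm (l (s m) - l (s n)) \<le> C * (r m + r n)" using W by blast
    have *: "norm (l (s m) - l (s n)) \<le> max C 0 * (r m + r n)" for m n
      using C[rule_format, of m n] mult_right_mono[of C "max C 0" "r m + r n"] r0[of m] r0[of n] by auto
    show "\<exists>C. 0 \<le> C \<and> (\<forall>m n. norm (l (s m) - l (s n)) \<le> C * (r m + r n))"
      apply (rule exI[of _ "max C 0"]) using * by auto
  qed
  then obtain c where c0: "\<And>l. l \<in> G \<Longrightarrow> 0 \<le> c l"
    and cb: "\<And>l m n. l \<in> G \<Longrightarrow> norm (l (s m) - l (s n)) \<le> c l * (r m + r n)"
    by metis
  define D where "D = {x. \<forall>l\<in>G. norm (l x) \<le> c l}"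
  have inD: "smul (of_real (1/\<rho>)) z \<in> D" if "0 < \<rho>" "\<forall>l\<in>G. norm (l z) \<le> \<rho> * c l" for \<rho> z
  proof -
    have "norm (l (smul (of_real (1/\<rho>)) z)) \<le> c l" if l: "l \<in> G" for l
    proof -
      have "norm (l (smul (of_real (1/\<rho>)) z)) = norm (l z) / \<rho>"
        using l \<open>0 < \<rho>\<close> by (simp add: l_smul norm_mult norm_divide)
      also have "\<dots> \<le> c l" using \<open>0 < \<rho>\<close> that \<open>\<forall>l\<in>G. norm (l z) \<le> \<rho> * c l\<close>
        by (simp add: pos_divide_le_eq mult.commute)
      finally show ?thesis .
    qed
    then show ?thesis unfolding D_def by blast
  qed
  have resc: "z = smul (of_real \<rho>) (smul (of_real (1/\<rho>)) z)" if "0 < \<rho>" for \<rho> z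
    using that by (simp flip: of_real_mult)
  have D0: "0 \<in> D" unfolding D_def using c0 by (simp add: l_zero)
  have Dcl: "lc_closed P D"
    unfolding lc_closed_def
  proof (intro allI impI)
    fix x assume H: "\<forall>a. \<forall>\<epsilon>>0. \<exists>y\<in>D. P a (x - y) < \<epsilon>"
    have "norm (l x) \<le> c l" if l: "l \<in> G" for l
    proof (rule field_le_epsilon)
      fix e :: real assume e: "0 < e"
      obtain b K where K: "\<And>z. norm (l z) \<le> K * P b z" using l_cont[OF l] by blast
      obtain y where y: "y \<in> D" "P b (x - y) < e / (\<bar>K\<bar> + 1)"
        using H e by (metis divide_pos_pos abs_ge_zero add_nonneg_pos zero_less_one)
      have "norm (l x) \<le> norm (l y) + norm (l (x - y))"
        using l by (simp add: l_diff norm_triangle_sub)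
      also have "norm (l (x - y)) \<le> \<bar>K\<bar> * P b (x - y)"
        using K[of "x - y"] P_nonneg[of b "x - y"] by (meson abs_ge_self mult_right_mono order_trans)
      also have "\<bar>K\<bar> * P b (x - y) \<le> \<bar>K\<bar> * (e / (\<bar>K\<bar> + 1))"
        using y(2) by (intro mult_left_mono) auto
      also have "\<bar>K\<bar> * (e / (\<bar>K\<bar> + 1)) \<le> e"
        using e by (simp add: divide_le_eq field_simps)
      finally show "norm (l x) \<le> c l + e" using y(1) l unfolding D_def by auto
    qed
    then show "x \<in> D" unfolding D_def by blast
  qed
  have Dbd: "lc_bounded P D"
  proof -
    have "\<forall>l\<in>G. \<exists>C. \<forall>x\<in>D. norm (l x) \<le> C" unfolding D_def by blast
    with db show ?thesis unfolding determines_boundedness_def by blast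
  qed
  have Dac: "abs_convex smul D"
    unfolding abs_convex_def
  proof (intro ballI allI impI)
    fix x y and a b :: 'k assume xy: "x \<in> D" "y \<in> D" and ab: "norm a + norm b \<le> 1"
    have "norm (l (smul a x + smul b y)) \<le> c l" if l: "l \<in> G" for l
    proof -
      have "norm (l (smul a x + smul b y)) = norm (a * l x + b * l y)" using l by (simp add: l_add l_smul)
      also have "\<dots> \<le> norm a * norm (l x) + norm b * norm (l y)"
        by (metis norm_mult norm_triangle_ineq)
      also have "\<dots> \<le> norm a * c l + norm b * c l"
        using xy l unfolding D_def by (intro add_mono mult_left_mono) auto
      also have "\<dots> = (norm a + norm b) * c l" by (simp add: algebra_simps)
      also have "\<dots> \<le> 1 * c l" using ab c0[OF l] by (intro mult_right_mono) auto
      finally show ?thesis by simp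
    qed
    then show "smul a x + smul b y \<in> D" unfolding D_def by blast
  qed
  have gauge_le: "gauge_fun smul D z \<le> \<rho>" if "0 < \<rho>" "\<forall>l\<in>G. norm (l z) \<le> \<rho> * c l" for \<rho> z
    unfolding gauge_fun_def
  proof (rule cInf_lower)
    show "\<rho> \<in> {t. 0 < t \<and> (\<exists>y\<in>D. z = smul (of_real t) y)}"
      using that inD[OF that] resc[OF that(1)] by blast
    show "bdd_below {t. 0 < t \<and> (\<exists>y\<in>D. z = smul (of_real t) y)}"
      by (rule bdd_belowI[of _ 0]) auto
  qed
  have span_bound: "\<exists>N\<ge>0. \<forall>l\<in>G. norm (l x) \<le> N * c l" if xs: "x \<in> span_set smul D" for x
  proof -
    obtain n y where ny: "y \<in> D" "x = smul (of_nat n) y" using xs unfolding span_set_def by blast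
    have "norm (l x) \<le> real n * c l" if l: "l \<in> G" for l
    proof -
      have "norm (l x) = real n * norm (l y)" using l ny by (simp add: l_smul norm_mult norm_divide)
      also have "\<dots> \<le> real n * c l" using ny l unfolding D_def by (intro mult_left_mono) auto
      finally show ?thesis .
    qed
    then show ?thesis by (intro exI[of _ "real n"]) auto
  qed
  have in_span: "z \<in> span_set smul D" if "0 \<le> \<rho>" "\<forall>l\<in>G. norm (l z) \<le> \<rho> * c l" for \<rho> z
  proof -
    define N where "N = nat \<lceil>\<rho>\<rceil> + 1"
    have N: "\<rho> \<le> real N" "0 < real N" unfolding N_def using that(1) by linarith+
    have "\<forall>l\<in>G. norm (l z) \<le> real N * c l"
      using that(2) N c0 by (meson mult_right_mono order_trans)
    then have "smul (of_real (1 / real N)) z \<in> D" using inD N by blast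
    moreover have "z = smul (of_nat N) (smul (of_real (1 / real N)) z)"
      using resc[OF N(2), of z] by simp
    ultimately show ?thesis unfolding span_set_def by blast
  qed
  define t where "t n = s n - s 0" for n
  have tl: "\<forall>l\<in>G. norm (l (t n)) \<le> (r n + r 0) * c l" for n
    using cb by (simp add: t_def l_diff mult.commute)
  have tspan: "t n \<in> span_set smul D" for n
    using in_span[OF _ tl[of n]] r0[of n] r0[of 0] by simp
  have cauchy: "\<forall>\<epsilon>>0. \<exists>N. \<forall>m\<ge>N. \<forall>n\<ge>N. gauge_fun smul D (t m - t n) < \<epsilon>"
  proof (intro allI impI)
    fix \<epsilon> :: real assume e: "0 < \<epsilon>"
    obtain N where N: "\<And>n. n \<ge> N \<Longrightarrow> norm (r n - 0) < \<epsilon> / 4"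
      using rlim e unfolding LIMSEQ_iff by (metis divide_pos_pos zero_less_numeral)
    have "gauge_fun smul D (t m - t n) < \<epsilon>" if "m \<ge> N" "n \<ge> N" for m n
    proof -
      have "\<forall>l\<in>G. norm (l (t m - t n)) \<le> (\<epsilon>/2) * c l"
      proof
        fix l assume l: "l \<in> G"
        have "norm (l (t m - t n)) = norm (l (s m) - l (s n))" using l by (simp add: t_def l_diff)
        also have "\<dots> \<le> c l * (r m + r n)" using cb l by blast
        also have "\<dots> \<le> c l * (\<epsilon>/2)" using N[OF that(1)] N[OF that(2)] c0[OF l]
          by (intro mult_left_mono) auto
        finally show "norm (l (t m - t n)) \<le> (\<epsilon>/2) * c l" by (simp add: mult.commute)
      qed
      then have "gauge_fun smul D (t m - t n) \<le> \<epsilon>/2" using e by (intro gauge_le) auto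
      then show ?thesis using e by simp
    qed
    then show "\<exists>N. \<forall>m\<ge>N. \<forall>n\<ge>N. gauge_fun smul D (t m - t n) < \<epsilon>" by blast
  qed
  have Dprops: "lc_closed P D \<and> lc_bounded P D \<and> abs_convex smul D \<and> D \<noteq> {}" using Dcl Dbd Dac D0 by blast
  have ts: "\<forall>n. t n \<in> span_set smul D" using tspan by blast
  have "\<exists>x\<in>span_set smul D. (\<lambda>n. gauge_fun smul D (t n - x)) \<longlonglongrightarrow> 0"
    using cpl[unfolded locally_complete_def, THEN spec[of _ D], THEN mp, OF Dprops, THEN spec[of _ t], THEN mp, OF ts, THEN mp, OF cauchy] .
  then obtain x where x: "x \<in> span_set smul D" and xl: "(\<lambda>n. gauge_fun smul D (t n - x)) \<longlonglongrightarrow> 0"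
    by blast
  obtain Nx where Nx: "Nx \<ge> 0" "\<forall>l\<in>G. norm (l x) \<le> Nx * c l" using span_bound[OF x] by blast
  have "(\<lambda>n. P a (s n - (s 0 + x))) \<longlonglongrightarrow> 0" for a
  proof -
    obtain M where M: "\<And>y. y \<in> D \<Longrightarrow> P a y \<le> M" using Dbd unfolding lc_bounded_def by blast
    define M' where "M' = max M 1"
    have M'p: "0 < M'" unfolding M'_def by simp
    have Pg: "P a (t n - x) \<le> M' * gauge_fun smul D (t n - x)" for n
    proof -
      let ?X = "{tt. 0 < tt \<and> (\<exists>y\<in>D. t n - x = smul (of_real tt) y)}"
      have bnd: "\<forall>l\<in>G. norm (l (t n - x)) \<le> (r n + r 0 + Nx + 1) * c l"
      proof
        fix l assume l: "l \<in> G"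
        have "norm (l (t n - x)) \<le> norm (l (t n)) + norm (l x)" using l by (simp add: l_diff norm_triangle_ineq4)
        also have "\<dots> \<le> (r n + r 0) * c l + Nx * c l" using tl[of n] Nx l by (intro add_mono) auto
        also have "\<dots> \<le> (r n + r 0 + Nx + 1) * c l" using c0[OF l] by (simp add: algebra_simps)
        finally show "norm (l (t n - x)) \<le> (r n + r 0 + Nx + 1) * c l" .
      qed
      have pos: "0 < r n + r 0 + Nx + 1" using r0[of n] r0[of 0] Nx by linarith
      have "r n + r 0 + Nx + 1 \<in> ?X" using inD[OF pos bnd] resc[OF pos] pos by blast
      then have ne: "?X \<noteq> {}" by blast
      have "P a (t n - x) / M' \<le> Inf ?X"
      proof (rule cInf_greatest[OF ne])
        fix tt assume "tt \<in> ?X"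
        then obtain y where y: "0 < tt" "y \<in> D" "t n - x = smul (of_real tt) y" by blast
        have "P a (t n - x) = tt * P a y" using y by (simp add: P_smul)
        also have "\<dots> \<le> tt * M'" using M[OF y(2)] y(1) unfolding M'_def by (intro mult_left_mono) auto
        finally show "P a (t n - x) / M' \<le> tt" using M'p by (simp add: pos_divide_le_eq)
      qed
      then show ?thesis using M'p unfolding gauge_fun_def by (simp add: pos_divide_le_eq mult.commute)
    qed
    have lim: "(\<lambda>n. M' * gauge_fun smul D (t n - x)) \<longlonglongrightarrow> 0"
      using tendsto_mult_right_zero[OF xl] .
    have ev: "eventually (\<lambda>n. norm (P a (s n - (s 0 + x))) \<le> M' * gauge_fun smul D (t n - x)) sequentially"
    proof (intro always_eventually allI)
      fix n
      have e: "s n - (s 0 + x) = t n - x" by (simp add: t_def algebra_simps)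
      show "norm (P a (s n - (s 0 + x))) \<le> M' * gauge_fun smul D (t n - x)"
        unfolding e using Pg[of n] P_nonneg[of a "t n - x"] by simp
    qed
    show ?thesis by (rule Lim_null_comparison[OF ev lim])
  qed
  then show ?thesis by blast
qed

end


context lcs begin

lemma complete_fam:
  fixes q :: "real \<Rightarrow> 'e" and w :: "('e \<Rightarrow> 'k) \<Rightarrow> 'k" and d \<gamma> :: real
  assumes d: "0 < d" and g: "0 < \<gamma>"
    and W: "\<And>l. l \<in> G \<Longrightarrow> \<exists>C. \<forall>h. h \<noteq> 0 \<and> \<bar>h\<bar> \<le> d \<longrightarrow> norm (l (q h) - w l) \<le> C * \<bar>h\<bar> powr \<gamma>"
  shows "\<exists>v. (\<forall>l\<in>G. l v = w l) \<and> (\<forall>a. ((\<lambda>h. P a (q h - v)) \<longlongrightarrow> 0) (at 0))"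
proof -
  define hs where "hs n = d * inverse (real (Suc n))" for n
  have hs: "hs n \<noteq> 0" "\<bar>hs n\<bar> \<le> d" for n
    using d by (auto simp: hs_def field_simps)
  have hs0: "hs \<longlonglongrightarrow> 0" unfolding hs_def
    using tendsto_mult_right_zero[OF LIMSEQ_inverse_real_of_nat] .
  define r where "r n = \<bar>hs n\<bar> powr \<gamma>" for n
  have r0: "0 \<le> r n" for n unfolding r_def by simp
  have rl: "r \<longlonglongrightarrow> 0" unfolding r_def
    by (rule tendsto_zero_powrI[OF tendsto_rabs_zero[OF hs0] tendsto_const _ g]) simp
  have "\<exists>v. \<forall>a. (\<lambda>n. P a (q (hs n) - v)) \<longlonglongrightarrow> 0"
  proof (rule complete_seq[OF r0 rl])
    fix l assume l: "l \<in> G"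
    obtain C where C: "\<forall>h. h \<noteq> 0 \<and> \<bar>h\<bar> \<le> d \<longrightarrow> norm (l (q h) - w l) \<le> C * \<bar>h\<bar> powr \<gamma>"
      using W[OF l] by blast
    have "norm (l (q (hs m)) - l (q (hs n))) \<le> C * (r m + r n)" for m n
    proof -
      have "norm (l (q (hs m)) - l (q (hs n))) \<le> norm (l (q (hs m)) - w l) + norm (l (q (hs n)) - w l)"
        by (rule norm_diff_triangle_le) (auto simp: norm_minus_commute)
      also have "\<dots> \<le> C * r m + C * r n" unfolding r_def using C hs by (intro add_mono) auto
      finally show ?thesis by (simp add: algebra_simps)
    qed
    then show "\<exists>C. \<forall>m n. norm (l (q (hs m)) - l (q (hs n))) \<le> C * (r m + r n)" by blast
  qed
  then obtain v where v: "\<And>a. (\<lambda>n. P a (q (hs n) - v)) \<longlonglongrightarrow> 0" by blast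
  have lv: "l v = w l" if l: "l \<in> G" for l
  proof -
    obtain b K where K: "\<And>z. norm (l z) \<le> K * P b z" using l_cont[OF l] by blast
    obtain C where C: "\<forall>h. h \<noteq> 0 \<and> \<bar>h\<bar> \<le> d \<longrightarrow> norm (l (q h) - w l) \<le> C * \<bar>h\<bar> powr \<gamma>"
      using W[OF l] by blast
    have "(\<lambda>n. l (q (hs n)) - l v) \<longlonglongrightarrow> 0"
    proof (rule Lim_null_comparison)
      show "eventually (\<lambda>n. norm (l (q (hs n)) - l v) \<le> K * P b (q (hs n) - v)) sequentially"
      proof (intro always_eventually allI)
        fix n show "norm (l (q (hs n)) - l v) \<le> K * P b (q (hs n) - v)"
          using K[of "q (hs n) - v"] l by (simp add: l_diff)
      qed
      show "(\<lambda>n. K * P b (q (hs n) - v)) \<longlonglongrightarrow> 0" by (rule tendsto_mult_right_zero[OF v])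
    qed
    then have 1: "(\<lambda>n. l (q (hs n))) \<longlonglongrightarrow> l v" by (simp add: LIM_zero_iff)
    have "(\<lambda>n. l (q (hs n)) - w l) \<longlonglongrightarrow> 0"
    proof (rule Lim_null_comparison)
      show "eventually (\<lambda>n. norm (l (q (hs n)) - w l) \<le> C * r n) sequentially"
        using C hs unfolding r_def by simp
      show "(\<lambda>n. C * r n) \<longlonglongrightarrow> 0" by (rule tendsto_mult_right_zero[OF rl])
    qed
    then have 2: "(\<lambda>n. l (q (hs n))) \<longlonglongrightarrow> w l" by (simp add: LIM_zero_iff)
    show ?thesis using LIMSEQ_unique[OF 1 2] .
  qed
  have tl: "((\<lambda>h. P a (q h - v)) \<longlongrightarrow> 0) (at 0)" for a
  proof -
    define J where "J = {(h, h'). h \<noteq> 0 \<and> \<bar>h\<bar> \<le> d \<and> h' \<noteq> 0 \<and> \<bar>h'\<bar> \<le> d}"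
    have "\<exists>M. \<forall>j\<in>J. P a ((\<lambda>(h, h'). q h - q h') j) \<le> M * (\<lambda>(h, h'). \<bar>h\<bar> powr \<gamma> + \<bar>h'\<bar> powr \<gamma>) j"
    proof (rule weak_bound)
      fix l assume l: "l \<in> G"
      obtain C where C: "\<forall>h. h \<noteq> 0 \<and> \<bar>h\<bar> \<le> d \<longrightarrow> norm (l (q h) - w l) \<le> C * \<bar>h\<bar> powr \<gamma>"
        using W[OF l] by blast
      have *: "norm (l (q h - q h')) \<le> C * (\<bar>h\<bar> powr \<gamma> + \<bar>h'\<bar> powr \<gamma>)" if hh: "(h, h') \<in> J" for h h'
      proof -
        have "norm (l (q h - q h')) \<le> norm (l (q h) - w l) + norm (l (q h') - w l)"
          using l by (simp add: l_diff) (rule norm_diff_triangle_le, auto simp: norm_minus_commute)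
        also have "\<dots> \<le> C * \<bar>h\<bar> powr \<gamma> + C * \<bar>h'\<bar> powr \<gamma>" using C hh unfolding J_def by (intro add_mono) auto
        finally show ?thesis by (simp add: algebra_simps)
      qed
      show "\<exists>C. \<forall>j\<in>J. norm (l ((\<lambda>(h, h'). q h - q h') j)) \<le> C * (\<lambda>(h, h'). \<bar>h\<bar> powr \<gamma> + \<bar>h'\<bar> powr \<gamma>) j"
      proof (intro exI[of _ C] ballI)
        fix j assume "j \<in> J"
        then obtain h h' where "j = (h, h')" "(h, h') \<in> J" by (cases j) auto
        then show "norm (l ((\<lambda>(h, h'). q h - q h') j)) \<le> C * (\<lambda>(h, h'). \<bar>h\<bar> powr \<gamma> + \<bar>h'\<bar> powr \<gamma>) j"
          using * by simp
      qed
    qed auto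
    then obtain M where M: "\<And>h h'. (h, h') \<in> J \<Longrightarrow> P a (q h - q h') \<le> M * (\<bar>h\<bar> powr \<gamma> + \<bar>h'\<bar> powr \<gamma>)"
      by fastforce
    have bd: "P a (q h - v) \<le> M * \<bar>h\<bar> powr \<gamma>" if h: "h \<noteq> 0" "\<bar>h\<bar> \<le> d" for h
    proof -
      have le: "P a (q h - v) \<le> M * (\<bar>h\<bar> powr \<gamma> + r n) + P a (q (hs n) - v)" for n
      proof -
        have "P a (q h - v) \<le> P a (q h - q (hs n)) + P a (q (hs n) - v)" by (rule P_tri)
        also have "\<dots> \<le> M * (\<bar>h\<bar> powr \<gamma> + r n) + P a (q (hs n) - v)"
          using M[of h "hs n"] h hs[of n] unfolding J_def r_def by auto
        finally show ?thesis .
      qed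
      have "(\<lambda>n. M * (\<bar>h\<bar> powr \<gamma> + r n) + P a (q (hs n) - v)) \<longlonglongrightarrow> M * (\<bar>h\<bar> powr \<gamma> + 0) + 0"
        by (intro tendsto_intros rl v)
      then show ?thesis using le by (intro LIMSEQ_le_const) auto
    qed
    show ?thesis
    proof (rule Lim_null_comparison)
      show "eventually (\<lambda>h. norm (P a (q h - v)) \<le> M * \<bar>h\<bar> powr \<gamma>) (at 0)"
        unfolding eventually_at using d bd P_nonneg
        by (intro exI[of _ d]) (auto simp: dist_norm)
      have "((\<lambda>h::real. \<bar>h\<bar> powr \<gamma>) \<longlongrightarrow> 0) (at 0)"
        by (rule tendsto_zero_powrI[OF tendsto_rabs_zero[OF tendsto_ident_at] tendsto_const _ g]) simp
      then show "((\<lambda>h. M * \<bar>h\<bar> powr \<gamma>) \<longlongrightarrow> 0) (at 0)" by (rule tendsto_mult_right_zero)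
    qed
  qed
  show ?thesis using lv tl by blast
qed

end


context lcs begin

context
  fixes \<Omega> :: "(real^'n::finite) set" and k :: nat and \<gamma> :: real and f :: "real^'n \<Rightarrow> 'e"
    and Dl :: "('e \<Rightarrow> 'k) \<Rightarrow> ('n \<Rightarrow> nat) \<Rightarrow> real^'n \<Rightarrow> 'k"
  assumes opn: "open \<Omega>" and gpos: "0 < \<gamma>" and gle: "\<gamma> \<le> 1"
   and H1: "\<And>l. l \<in> G \<Longrightarrow> deriv_system (*) (\<lambda>_::unit. norm) \<Omega> k (l \<circ> f) (Dl l)"
   and H2: "\<And>l K. l \<in> G \<Longrightarrow> compact K \<Longrightarrow> K \<subseteq> \<Omega> \<Longrightarrow> \<exists>C. \<forall>\<beta>. mi_order \<beta> \<le> k \<longrightarrow>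
              (\<forall>x\<in>K. \<forall>y\<in>K. norm (Dl l \<beta> x - Dl l \<beta> y) \<le> C * norm (x - y) powr \<gamma>)"
   and H3: "\<And>l K. l \<in> G \<Longrightarrow> compact K \<Longrightarrow> K \<subseteq> \<Omega> \<Longrightarrow> \<exists>C. \<forall>x\<in>K. \<forall>\<beta>. mi_order \<beta> \<le> k \<longrightarrow> norm (Dl l \<beta> x) \<le> C"
begin

lemma step:
  fixes E :: "real^'n \<Rightarrow> 'e" and \<beta> :: "'n \<Rightarrow> nat"
  assumes rep: "\<And>y l. y \<in> \<Omega> \<Longrightarrow> l \<in> G \<Longrightarrow> l (E y) = Dl l \<beta> y"
    and ord: "mi_order \<beta> < k" and x: "x \<in> \<Omega>"
  shows "\<exists>v. (\<forall>l\<in>G. l v = Dl l (\<beta>(i := Suc (\<beta> i))) x) \<and> has_partial smul P E i x v"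
proof -
  let ?b = "\<beta>(i := Suc (\<beta> i))"
  obtain d where d: "d > 0" "cball x d \<subseteq> \<Omega>" using opn x open_contains_cball by blast
  have ordb: "mi_order ?b \<le> k" using mi_order_upd[of \<beta> i "Suc (\<beta> i)"] ord by simp
  have pt: "x + t *\<^sub>R axis i 1 \<in> \<Omega>" if "\<bar>t\<bar> \<le> d" for t
    using d that by (auto simp: dist_norm)
  define q where "q h = smul (of_real (1/h)) (E (x + h *\<^sub>R axis i 1) - E x)" for h
  have "\<exists>v. (\<forall>l\<in>G. l v = Dl l ?b x) \<and> (\<forall>a. ((\<lambda>h. P a (q h - v)) \<longlongrightarrow> 0) (at 0))"
  proof (rule complete_fam[OF d(1) gpos])
    fix l assume l: "l \<in> G"
    have ds: "deriv_system (*) (\<lambda>_::unit. norm) \<Omega> k (l \<circ> f) (Dl l)" using H1 l by blast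
    have hp: "has_partial (*) (\<lambda>_::unit. norm) (Dl l \<beta>) i y (Dl l ?b y)" if "y \<in> \<Omega>" for y
      using ds ord that unfolding deriv_system_def by blast
    define Seg where "Seg = (\<lambda>t. x + t *\<^sub>R axis i 1) ` {-d..d}"
    have cS: "compact Seg" unfolding Seg_def
      by (intro compact_continuous_image continuous_intros compact_Icc)
    have SS: "Seg \<subseteq> \<Omega>" using pt unfolding Seg_def by auto
    obtain C where C: "\<forall>\<beta>'. mi_order \<beta>' \<le> k \<longrightarrow> (\<forall>y\<in>Seg. \<forall>z\<in>Seg. norm (Dl l \<beta>' y - Dl l \<beta>' z) \<le> C * norm (y - z) powr \<gamma>)"
      using H2[OF l cS SS] by blast
    have Hs: "norm (Dl l ?b (x + t *\<^sub>R axis i 1) - Dl l ?b x) \<le> max C 0 * \<bar>t\<bar> powr \<gamma>" if t: "\<bar>t\<bar> \<le> d" for t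
    proof -
      have "x + t *\<^sub>R axis i 1 \<in> Seg" using t unfolding Seg_def by (intro image_eqI[of _ _ t]) auto
      moreover have "x \<in> Seg" unfolding Seg_def using d by (auto intro!: image_eqI[of _ _ 0])
      ultimately have "norm (Dl l ?b (x + t *\<^sub>R axis i 1) - Dl l ?b x) \<le> C * norm (x + t *\<^sub>R axis i 1 - x) powr \<gamma>"
        using C ordb by blast
      also have "\<dots> \<le> max C 0 * \<bar>t\<bar> powr \<gamma>" by (simp add: mult_right_mono)
      finally show ?thesis .
    qed
    show "\<exists>C. \<forall>h. h \<noteq> 0 \<and> \<bar>h\<bar> \<le> d \<longrightarrow> norm (l (q h) - Dl l ?b x) \<le> C * \<bar>h\<bar> powr \<gamma>"
    proof (intro exI allI impI)
      fix h :: real assume h: "h \<noteq> 0 \<and> \<bar>h\<bar> \<le> d"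
      have "l (q h) = of_real (1/h) * (Dl l \<beta> (x + h *\<^sub>R axis i 1) - Dl l \<beta> x)"
        using l rep[OF pt[of h] l] rep[OF x l] h by (simp add: q_def l_smul l_diff)
      moreover have "norm (of_real (1/h) * (Dl l \<beta> (x + h *\<^sub>R axis i 1) - Dl l \<beta> x) - Dl l ?b x) \<le> max C 0 * \<bar>h\<bar> powr \<gamma>"
      proof (rule seg_est)
        fix t :: real assume t: "\<bar>t\<bar> \<le> \<bar>h\<bar>"
        then have td: "\<bar>t\<bar> \<le> d" using h by linarith
        show "has_partial (*) (\<lambda>_::unit. norm) (Dl l \<beta>) i (x + t *\<^sub>R axis i 1) (Dl l ?b (x + t *\<^sub>R axis i 1))"
          by (rule hp[OF pt[OF td]])
        show "norm (Dl l ?b (x + t *\<^sub>R axis i 1) - Dl l ?b x) \<le> max C 0 * \<bar>t\<bar> powr \<gamma>"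
          by (rule Hs[OF td])
      qed (use h gpos in auto)
      ultimately show "norm (l (q h) - Dl l ?b x) \<le> max C 0 * \<bar>h\<bar> powr \<gamma>" by simp
    qed
  qed
  then show ?thesis unfolding has_partial_def q_def by blast
qed

lemma exist_rep: "mi_order \<beta> = n \<Longrightarrow> n \<le> k \<Longrightarrow> x \<in> \<Omega> \<Longrightarrow> \<exists>v. \<forall>l\<in>G. l v = Dl l \<beta> x"
proof (induction n arbitrary: \<beta> x)
  case 0
  then have "\<beta> = (\<lambda>_. 0)" unfolding mi_order_def by (simp add: fun_eq_iff)
  moreover have "l (f x) = Dl l (\<lambda>_. 0) x" if "l \<in> G" for l
    using H1[OF that] 0 unfolding deriv_system_def by auto
  ultimately show ?case by blast
next
  case (Suc n)
  obtain i where i: "\<beta> i > 0"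
  proof (rule ccontr)
    assume "\<not> thesis"
    then have "\<forall>i. \<beta> i = 0" using that by auto
    then have "mi_order \<beta> = 0" unfolding mi_order_def by simp
    then show False using Suc.prems by simp
  qed
  define \<beta>0 where "\<beta>0 = \<beta>(i := \<beta> i - 1)"
  have o0: "mi_order \<beta>0 = n" using mi_order_upd[of \<beta> i "\<beta> i - 1"] Suc.prems i unfolding \<beta>0_def by simp
  have bb: "\<beta>0(i := Suc (\<beta>0 i)) = \<beta>" using i by (auto simp: \<beta>0_def fun_eq_iff)
  have "\<forall>y\<in>\<Omega>. \<exists>v. \<forall>l\<in>G. l v = Dl l \<beta>0 y" using Suc.IH[OF o0] Suc.prems by auto
  then obtain E where E: "\<And>y. y\<in>\<Omega> \<Longrightarrow> \<forall>l\<in>G. l (E y) = Dl l \<beta>0 y" by metis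
  have "\<exists>v. (\<forall>l\<in>G. l v = Dl l (\<beta>0(i := Suc (\<beta>0 i))) x) \<and> has_partial smul P E i x v"
    by (rule step) (use E o0 Suc.prems in auto)
  then show ?case using bb by auto
qed

theorem core: "Ck_gamma_loc smul P \<Omega> k \<gamma> f"
proof -
  define Dv where "Dv \<beta> x = (SOME v. \<forall>l\<in>G. l v = Dl l \<beta> x)" for \<beta> x
  have rep: "l (Dv \<beta> x) = Dl l \<beta> x" if r: "mi_order \<beta> \<le> k" "x \<in> \<Omega>" "l \<in> G" for \<beta> x l
  proof -
    obtain v where "\<forall>l\<in>G. l v = Dl l \<beta> x" using exist_rep[OF refl r(1,2)] by blast
    then have "\<forall>l\<in>G. l (Dv \<beta> x) = Dl l \<beta> x" unfolding Dv_def by (rule someI)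
    then show ?thesis using r(3) by blast
  qed
  have DS: "deriv_system smul P \<Omega> k f Dv"
    unfolding deriv_system_def
  proof (intro conjI allI impI ballI)
    fix x assume x: "x \<in> \<Omega>"
    show "Dv (\<lambda>_. 0) x = f x"
    proof (rule uniq, intro ballI)
      fix l assume l: "l \<in> G"
      have "l (Dv (\<lambda>_. 0) x) = Dl l (\<lambda>_. 0) x" by (rule rep) (use x l in \<open>auto simp: mi_order_def\<close>)
      also have "\<dots> = l (f x)" using H1[OF l] x unfolding deriv_system_def by auto
      finally show "l (Dv (\<lambda>_. 0) x) = l (f x)" .
    qed
  next
    fix \<beta> :: "'n \<Rightarrow> nat" and i x assume o: "mi_order \<beta> < k" and x: "x \<in> \<Omega>"
    obtain v where v: "\<forall>l\<in>G. l v = Dl l (\<beta>(i := Suc (\<beta> i))) x" "has_partial smul P (Dv \<beta>) i x v"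
      using step[of "Dv \<beta>" \<beta> x i] rep o x by auto
    have ordb: "mi_order (\<beta>(i := Suc (\<beta> i))) \<le> k" using mi_order_upd[of \<beta> i "Suc (\<beta> i)"] o by simp
    have "v = Dv (\<beta>(i := Suc (\<beta> i))) x"
      by (rule uniq) (use v(1) rep[OF ordb x] in auto)
    then show "has_partial smul P (Dv \<beta>) i x (Dv (\<beta>(i := Suc (\<beta> i))) x)" using v(2) by simp
  next
    fix \<beta> :: "'n \<Rightarrow> nat" assume o: "mi_order \<beta> \<le> k"
    show "lc_continuous_on P \<Omega> (Dv \<beta>)"
      unfolding lc_continuous_on_def
    proof (intro ballI allI)
      fix x a assume x: "x \<in> \<Omega>"
      obtain d where d: "d > 0" "cball x d \<subseteq> \<Omega>" using opn x open_contains_cball by blast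
      have "\<exists>M. \<forall>y\<in>cball x d. P a (Dv \<beta> y - Dv \<beta> x) \<le> M * norm (y - x) powr \<gamma>"
      proof (rule weak_bound)
        fix l assume l: "l \<in> G"
        obtain C where C: "\<forall>\<beta>. mi_order \<beta> \<le> k \<longrightarrow> (\<forall>y\<in>cball x d. \<forall>z\<in>cball x d. norm (Dl l \<beta> y - Dl l \<beta> z) \<le> C * norm (y - z) powr \<gamma>)"
          using H2[OF l compact_cball d(2)] by blast
        have "norm (l (Dv \<beta> y - Dv \<beta> x)) \<le> C * norm (y - x) powr \<gamma>" if y: "y \<in> cball x d" for y
        proof -
          have "l (Dv \<beta> y - Dv \<beta> x) = Dl l \<beta> y - Dl l \<beta> x"
            using rep[OF o _ l] y d x by (auto simp: l_diff[OF l])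
          then show ?thesis using C o y d by auto
        qed
        then show "\<exists>C. \<forall>y\<in>cball x d. norm (l (Dv \<beta> y - Dv \<beta> x)) \<le> C * norm (y - x) powr \<gamma>" by blast
      qed simp
      then obtain M where M: "\<And>y. y \<in> cball x d \<Longrightarrow> P a (Dv \<beta> y - Dv \<beta> x) \<le> M * norm (y - x) powr \<gamma>" by blast
      show "((\<lambda>y. P a (Dv \<beta> y - Dv \<beta> x)) \<longlongrightarrow> 0) (at x within \<Omega>)"
      proof (rule Lim_null_comparison)
        show "eventually (\<lambda>y. norm (P a (Dv \<beta> y - Dv \<beta> x)) \<le> M * norm (y - x) powr \<gamma>) (at x within \<Omega>)"
          unfolding eventually_at using d M P_nonneg
          by (intro exI[of _ d]) (auto simp: dist_norm norm_minus_commute)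
        have "((\<lambda>y. norm (y - x)) \<longlongrightarrow> 0) (at x within \<Omega>)"
          by (intro tendsto_norm_zero LIM_zero tendsto_ident_at)
        then have "((\<lambda>y. norm (y - x) powr \<gamma>) \<longlongrightarrow> 0) (at x within \<Omega>)"
          by (rule tendsto_zero_powrI[OF _ tendsto_const _ gpos]) simp
        then show "((\<lambda>y. M * norm (y - x) powr \<gamma>) \<longlongrightarrow> 0) (at x within \<Omega>)"
          by (rule tendsto_mult_right_zero)
      qed
    qed
  qed
  have BD: "(\<exists>C. \<forall>x\<in>K. \<forall>\<beta>. mi_order \<beta> \<le> k \<longrightarrow> P a (Dv \<beta> x) \<le> C)
      \<and> (\<exists>C. \<forall>\<beta>. mi_order \<beta> = k \<longrightarrow> (\<forall>x\<in>K. \<forall>y\<in>K. x \<noteq> y \<longrightarrow>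
            P a (Dv \<beta> x - Dv \<beta> y) \<le> C * norm (x - y) powr \<gamma>))"
    if K: "compact K" "K \<subseteq> \<Omega>" for K a
  proof
    have "\<exists>M. \<forall>j\<in>K \<times> {\<beta>::'n\<Rightarrow>nat. mi_order \<beta> \<le> k}. P a ((\<lambda>(x, \<beta>). Dv \<beta> x) j) \<le> M * (\<lambda>_. 1) j"
    proof (rule weak_bound)
      fix l assume l: "l \<in> G"
      obtain C where C: "\<forall>x\<in>K. \<forall>\<beta>. mi_order \<beta> \<le> k \<longrightarrow> norm (Dl l \<beta> x) \<le> C" using H3[OF l K] by blast
      have *: "norm (l (Dv \<beta> x)) \<le> C * 1" if r: "x \<in> K" "mi_order \<beta> \<le> k" for x \<beta>
        using C rep[OF r(2) _ l] r K by auto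
      show "\<exists>C. \<forall>j\<in>K \<times> {\<beta>::'n\<Rightarrow>nat. mi_order \<beta> \<le> k}. norm (l ((\<lambda>(x, \<beta>). Dv \<beta> x) j)) \<le> C * (\<lambda>_. 1) j"
      proof (intro exI[of _ C] ballI)
        fix j assume "j \<in> K \<times> {\<beta>::'n\<Rightarrow>nat. mi_order \<beta> \<le> k}"
        then obtain x \<beta> where "j = (x, \<beta>)" "x \<in> K" "mi_order \<beta> \<le> k" by (cases j) auto
        then show "norm (l ((\<lambda>(x, \<beta>). Dv \<beta> x) j)) \<le> C * (\<lambda>_. 1) j" using * by simp
      qed
    qed simp
    then show "\<exists>C. \<forall>x\<in>K. \<forall>\<beta>. mi_order \<beta> \<le> k \<longrightarrow> P a (Dv \<beta> x) \<le> C" by auto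
  next
    have "\<exists>M. \<forall>j\<in>{(x, y, \<beta>::'n\<Rightarrow>nat). x \<in> K \<and> y \<in> K \<and> mi_order \<beta> = k}.
        P a ((\<lambda>(x, y, \<beta>). Dv \<beta> x - Dv \<beta> y) j) \<le> M * (\<lambda>(x, y, \<beta>). norm (x - y) powr \<gamma>) j"
    proof (rule weak_bound)
      fix l assume l: "l \<in> G"
      obtain C where C: "\<forall>\<beta>. mi_order \<beta> \<le> k \<longrightarrow> (\<forall>x\<in>K. \<forall>y\<in>K. norm (Dl l \<beta> x - Dl l \<beta> y) \<le> C * norm (x - y) powr \<gamma>)"
        using H2[OF l K] by blast
      have *: "norm (l (Dv \<beta> x - Dv \<beta> y)) \<le> C * norm (x - y) powr \<gamma>" if r: "x \<in> K" "y \<in> K" "mi_order \<beta> = k" for x y \<beta>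
      proof -
        have xo: "x \<in> \<Omega>" using r(1) K(2) by blast
        have yo: "y \<in> \<Omega>" using r(2) K(2) by blast
        have o: "mi_order \<beta> \<le> k" using r(3) by simp
        have "l (Dv \<beta> x - Dv \<beta> y) = Dl l \<beta> x - Dl l \<beta> y"
          by (simp add: l_diff[OF l] rep[OF o xo l] rep[OF o yo l])
        then show ?thesis using C r by auto
      qed
      show "\<exists>C. \<forall>j\<in>{(x, y, \<beta>::'n\<Rightarrow>nat). x \<in> K \<and> y \<in> K \<and> mi_order \<beta> = k}.
          norm (l ((\<lambda>(x, y, \<beta>). Dv \<beta> x - Dv \<beta> y) j)) \<le> C * (\<lambda>(x, y, \<beta>). norm (x - y) powr \<gamma>) j"
      proof (intro exI[of _ C] ballI)
        fix j assume "j \<in> {(x, y, \<beta>::'n\<Rightarrow>nat). x \<in> K \<and> y \<in> K \<and> mi_order \<beta> = k}"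
        then obtain x y \<beta> where "j = (x, y, \<beta>)" "x \<in> K" "y \<in> K" "mi_order \<beta> = k" by (cases j) auto
        then show "norm (l ((\<lambda>(x, y, \<beta>). Dv \<beta> x - Dv \<beta> y) j)) \<le> C * (\<lambda>(x, y, \<beta>). norm (x - y) powr \<gamma>) j"
          using * by simp
      qed
    qed auto
    then show "\<exists>C. \<forall>\<beta>. mi_order \<beta> = k \<longrightarrow> (\<forall>x\<in>K. \<forall>y\<in>K. x \<noteq> y \<longrightarrow>
            P a (Dv \<beta> x - Dv \<beta> y) \<le> C * norm (x - y) powr \<gamma>)" by auto
  qed
  have BDall: "\<forall>K. compact K \<and> K \<subseteq> \<Omega> \<longrightarrow> (\<forall>a. (\<exists>C. \<forall>x\<in>K. \<forall>\<beta>. mi_order \<beta> \<le> k \<longrightarrow> P a (Dv \<beta> x) \<le> C)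
      \<and> (\<exists>C. \<forall>\<beta>. mi_order \<beta> = k \<longrightarrow> (\<forall>x\<in>K. \<forall>y\<in>K. x \<noteq> y \<longrightarrow>
            P a (Dv \<beta> x - Dv \<beta> y) \<le> C * norm (x - y) powr \<gamma>)))"
  proof (intro allI impI)
    fix K a assume "compact K \<and> K \<subseteq> \<Omega>"
    then show "(\<exists>C. \<forall>x\<in>K. \<forall>\<beta>. mi_order \<beta> \<le> k \<longrightarrow> P a (Dv \<beta> x) \<le> C)
      \<and> (\<exists>C. \<forall>\<beta>. mi_order \<beta> = k \<longrightarrow> (\<forall>x\<in>K. \<forall>y\<in>K. x \<noteq> y \<longrightarrow>
            P a (Dv \<beta> x - Dv \<beta> y) \<le> C * norm (x - y) powr \<gamma>))"
      using BD[of K a] by (elim conjE)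
  qed
  show ?thesis unfolding Ck_gamma_loc_def
    by (rule exI[of _ Dv]) (rule conjI[OF DS BDall])
qed

end
end


context lcs begin

lemma partA:
  fixes \<Omega> :: "(real^'n::finite) set" and f :: "real^'n \<Rightarrow> 'e" and k :: nat and \<gamma> :: real
  assumes opn: "open \<Omega>" and g: "0 < \<gamma>" "\<gamma> \<le> 1" and A: "\<forall>l\<in>G. Ck_gamma_loc_scalar \<Omega> k \<gamma> (l \<circ> f)"
  shows "Ck_gamma_loc smul P \<Omega> k \<gamma> f"
proof -
  have "\<forall>l\<in>G. \<exists>D. deriv_system (*) (\<lambda>_::unit. norm) \<Omega> k (l \<circ> f) D \<and> (\<forall>K. compact K \<and> K \<subseteq> \<Omega> \<longrightarrow>
      ((\<exists>C. \<forall>x\<in>K. \<forall>\<beta>. mi_order \<beta> \<le> k \<longrightarrow> norm (D \<beta> x) \<le> C) \<and>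
       (\<exists>C. \<forall>\<beta>. mi_order \<beta> = k \<longrightarrow> (\<forall>x\<in>K. \<forall>y\<in>K. x \<noteq> y \<longrightarrow> norm (D \<beta> x - D \<beta> y) \<le> C * norm (x - y) powr \<gamma>))))"
    using A unfolding Ck_gamma_loc_def by simp
  from bchoice[OF this] obtain Dl where Dl: "\<forall>l\<in>G. deriv_system (*) (\<lambda>_::unit. norm) \<Omega> k (l \<circ> f) (Dl l) \<and> (\<forall>K. compact K \<and> K \<subseteq> \<Omega> \<longrightarrow>
      ((\<exists>C. \<forall>x\<in>K. \<forall>\<beta>. mi_order \<beta> \<le> k \<longrightarrow> norm (Dl l \<beta> x) \<le> C) \<and>
       (\<exists>C. \<forall>\<beta>. mi_order \<beta> = k \<longrightarrow> (\<forall>x\<in>K. \<forall>y\<in>K. x \<noteq> y \<longrightarrow> norm (Dl l \<beta> x - Dl l \<beta> y) \<le> C * norm (x - y) powr \<gamma>))))"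
    by (elim exE) (erule that)
  show ?thesis
  proof (rule core[where Dl = Dl, OF opn g])
    fix l assume l: "l \<in> G"
    show "deriv_system (*) (\<lambda>_::unit. norm) \<Omega> k (l \<circ> f) (Dl l)" using Dl l by blast
  next
    fix l K assume l: "l \<in> G" and K: "compact K" "K \<subseteq> \<Omega>"
    have ds: "deriv_system (*) (\<lambda>_::unit. norm) \<Omega> k (l \<circ> f) (Dl l)" using Dl l by blast
    obtain Ck where Ck: "\<forall>\<beta>. mi_order \<beta> = k \<longrightarrow> (\<forall>x\<in>K. \<forall>y\<in>K. x \<noteq> y \<longrightarrow> norm (Dl l \<beta> x - Dl l \<beta> y) \<le> Ck * norm (x - y) powr \<gamma>)"
      using conjunct2[OF bspec[OF Dl l], rule_format, OF conjI[OF K]] by (elim conjE exE) (rule that, assumption)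
    have each: "\<exists>C. \<forall>j\<in>K \<times> K. norm (Dl l \<beta> (fst j) - Dl l \<beta> (snd j)) \<le> C * norm (fst j - snd j) powr \<gamma>"
      if b: "\<beta> \<in> {\<beta>. mi_order \<beta> \<le> k}" for \<beta>
    proof (cases "mi_order \<beta> = k")
      case True
      have "norm (Dl l \<beta> x - Dl l \<beta> y) \<le> Ck * norm (x - y) powr \<gamma>" if "x \<in> K" "y \<in> K" for x y
        using Ck True that by (cases "x = y") auto
      then show ?thesis by auto
    next
      case False
      then have o: "mi_order \<beta> < k" using b by simp
      have "\<exists>C. \<forall>x\<in>K. \<forall>y\<in>K. norm (Dl l \<beta> x - Dl l \<beta> y) \<le> C * norm (x - y) powr \<gamma>"
      proof (rule hoelder_C1[OF opn K, where gd = "\<lambda>i. Dl l (\<beta>(i := Suc (\<beta> i)))"])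
        fix i z assume "z \<in> \<Omega>"
        then show "has_partial (*) (\<lambda>_::unit. norm) (Dl l \<beta>) i z (Dl l (\<beta>(i := Suc (\<beta> i))) z)"
          using ds o unfolding deriv_system_def by blast
      next
        fix i
        have "mi_order (\<beta>(i := Suc (\<beta> i))) \<le> k" using mi_order_upd[of \<beta> i "Suc (\<beta> i)"] o by simp
        then show "continuous_on \<Omega> (Dl l (\<beta>(i := Suc (\<beta> i))))"
          using ds unfolding deriv_system_def scalar_cont_iff by blast
      next
        show "continuous_on \<Omega> (Dl l \<beta>)" using ds b unfolding deriv_system_def scalar_cont_iff by blast
      qed (use g in auto)
      then show ?thesis by auto
    qed
    obtain C where C: "\<forall>\<beta>\<in>{\<beta>. mi_order \<beta> \<le> k}. \<forall>j\<in>K \<times> K. norm (Dl l \<beta> (fst j) - Dl l \<beta> (snd j)) \<le> C * norm (fst j - snd j) powr \<gamma>"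
      using finite_unif[where Q="\<lambda>\<beta> j. norm (Dl l \<beta> (fst j) - Dl l \<beta> (snd j))" and w="\<lambda>j. norm (fst j - snd j) powr \<gamma>", OF finite_mi[of k] each] by auto
    show "\<exists>C. \<forall>\<beta>. mi_order \<beta> \<le> k \<longrightarrow> (\<forall>x\<in>K. \<forall>y\<in>K. norm (Dl l \<beta> x - Dl l \<beta> y) \<le> C * norm (x - y) powr \<gamma>)"
    proof (intro exI[of _ C] allI impI ballI)
      fix \<beta> :: "'n \<Rightarrow> nat" and x y assume "mi_order \<beta> \<le> k" "x \<in> K" "y \<in> K"
      then show "norm (Dl l \<beta> x - Dl l \<beta> y) \<le> C * norm (x - y) powr \<gamma>"
        using C[rule_format, of \<beta> "(x, y)"] by simp
    qed
  next
    fix l K assume l: "l \<in> G" and K: "compact K" "K \<subseteq> \<Omega>"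
    show "\<exists>C. \<forall>x\<in>K. \<forall>\<beta>. mi_order \<beta> \<le> k \<longrightarrow> norm (Dl l \<beta> x) \<le> C"
      using conjunct2[OF bspec[OF Dl l], rule_format, OF conjI[OF K]] by (rule conjunct1)
  qed
qed

lemma partB:
  fixes \<Omega> :: "(real^'n::finite) set" and f :: "real^'n \<Rightarrow> 'e" and k :: nat
  assumes opn: "open \<Omega>" and A: "\<forall>l\<in>G. Ck_scalar \<Omega> (Suc k) (l \<circ> f)"
  shows "Ck_gamma_loc smul P \<Omega> k 1 f"
proof -
  have "\<forall>l\<in>G. \<exists>D. deriv_system (*) (\<lambda>_::unit. norm) \<Omega> (Suc k) (l \<circ> f) D"
    using A unfolding Ck_def by simp
  from bchoice[OF this] obtain Dl where Dl: "\<forall>l\<in>G. deriv_system (*) (\<lambda>_::unit. norm) \<Omega> (Suc k) (l \<circ> f) (Dl l)"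
    by (elim exE) (erule that)
  show ?thesis
  proof (rule core[where Dl = Dl, OF opn])
    fix l assume l: "l \<in> G"
    have ds: "deriv_system (*) (\<lambda>_::unit. norm) \<Omega> (Suc k) (l \<circ> f) (Dl l)" using Dl l by blast
    have d1: "\<forall>x\<in>\<Omega>. Dl l (\<lambda>_. 0) x = (l \<circ> f) x" using ds unfolding deriv_system_def by blast
    have d2: "\<forall>\<beta> i. mi_order \<beta> < Suc k \<longrightarrow> (\<forall>x\<in>\<Omega>. has_partial (*) (\<lambda>_::unit. norm) (Dl l \<beta>) i x (Dl l (\<beta>(i := Suc (\<beta> i))) x))"
      using ds unfolding deriv_system_def by blast
    have d3: "\<forall>\<beta>. mi_order \<beta> \<le> Suc k \<longrightarrow> lc_continuous_on (\<lambda>_::unit. norm) \<Omega> (Dl l \<beta>)"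
      using ds unfolding deriv_system_def by blast
    show "deriv_system (*) (\<lambda>_::unit. norm) \<Omega> k (l \<circ> f) (Dl l)"
      unfolding deriv_system_def
    proof (intro conjI)
      show "\<forall>x\<in>\<Omega>. Dl l (\<lambda>_. 0) x = (l \<circ> f) x" by (rule d1)
      show "\<forall>\<beta> i. mi_order \<beta> < k \<longrightarrow> (\<forall>x\<in>\<Omega>. has_partial (*) (\<lambda>_::unit. norm) (Dl l \<beta>) i x (Dl l (\<beta>(i := Suc (\<beta> i))) x))"
        using d2 less_SucI by blast
      show "\<forall>\<beta>. mi_order \<beta> \<le> k \<longrightarrow> lc_continuous_on (\<lambda>_::unit. norm) \<Omega> (Dl l \<beta>)"
        using d3 le_SucI by blast
    qed
  next
    fix l K assume l: "l \<in> G" and K: "compact K" "K \<subseteq> \<Omega>"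
    have ds: "deriv_system (*) (\<lambda>_::unit. norm) \<Omega> (Suc k) (l \<circ> f) (Dl l)" using Dl l by blast
    have each: "\<exists>C. \<forall>j\<in>K \<times> K. norm (Dl l \<beta> (fst j) - Dl l \<beta> (snd j)) \<le> C * norm (fst j - snd j) powr 1"
      if b: "\<beta> \<in> {\<beta>. mi_order \<beta> \<le> k}" for \<beta>
    proof -
      have o: "mi_order \<beta> < Suc k" using b by simp
      have "\<exists>C. \<forall>x\<in>K. \<forall>y\<in>K. norm (Dl l \<beta> x - Dl l \<beta> y) \<le> C * norm (x - y) powr 1"
      proof (rule hoelder_C1[OF opn K, where gd = "\<lambda>i. Dl l (\<beta>(i := Suc (\<beta> i)))"])
        fix i z assume "z \<in> \<Omega>"
        then show "has_partial (*) (\<lambda>_::unit. norm) (Dl l \<beta>) i z (Dl l (\<beta>(i := Suc (\<beta> i))) z)"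
          using ds o unfolding deriv_system_def by blast
      next
        fix i
        have "mi_order (\<beta>(i := Suc (\<beta> i))) \<le> Suc k" using mi_order_upd[of \<beta> i "Suc (\<beta> i)"] o by simp
        then show "continuous_on \<Omega> (Dl l (\<beta>(i := Suc (\<beta> i))))"
          using ds unfolding deriv_system_def scalar_cont_iff by blast
      next
        have "mi_order \<beta> \<le> Suc k" using b by simp
        then show "continuous_on \<Omega> (Dl l \<beta>)" using ds unfolding deriv_system_def scalar_cont_iff by blast
      qed simp_all
      then show ?thesis by auto
    qed
    obtain C where C: "\<forall>\<beta>\<in>{\<beta>. mi_order \<beta> \<le> k}. \<forall>j\<in>K \<times> K. norm (Dl l \<beta> (fst j) - Dl l \<beta> (snd j)) \<le> C * norm (fst j - snd j) powr 1"
      using finite_unif[where Q="\<lambda>\<beta> j. norm (Dl l \<beta> (fst j) - Dl l \<beta> (snd j))" and w="\<lambda>j. norm (fst j - snd j) powr 1", OF finite_mi[of k] each] by auto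
    show "\<exists>C. \<forall>\<beta>. mi_order \<beta> \<le> k \<longrightarrow> (\<forall>x\<in>K. \<forall>y\<in>K. norm (Dl l \<beta> x - Dl l \<beta> y) \<le> C * norm (x - y) powr 1)"
    proof (intro exI[of _ C] allI impI ballI)
      fix \<beta> :: "'n \<Rightarrow> nat" and x y assume "mi_order \<beta> \<le> k" "x \<in> K" "y \<in> K"
      then show "norm (Dl l \<beta> x - Dl l \<beta> y) \<le> C * norm (x - y) powr 1"
        using C[rule_format, of \<beta> "(x, y)"] by simp
    qed
  next
    fix l K assume l: "l \<in> G" and K: "compact K" "K \<subseteq> \<Omega>"
    have ds: "deriv_system (*) (\<lambda>_::unit. norm) \<Omega> (Suc k) (l \<circ> f) (Dl l)" using Dl l by blast
    have each: "\<exists>C. \<forall>x\<in>K. norm (Dl l \<beta> x) \<le> C * 1" if b: "\<beta> \<in> {\<beta>. mi_order \<beta> \<le> k}" for \<beta>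
    proof -
      have "mi_order \<beta> \<le> Suc k" using b by simp
      then have "continuous_on \<Omega> (Dl l \<beta>)" using ds unfolding deriv_system_def scalar_cont_iff by blast
      then show ?thesis using bound_compact[OF _ K] by auto
    qed
    obtain C where C: "\<forall>\<beta>\<in>{\<beta>. mi_order \<beta> \<le> k}. \<forall>x\<in>K. norm (Dl l \<beta> x) \<le> C * 1"
      using finite_unif[where Q="\<lambda>\<beta> x. norm (Dl l \<beta> x)" and w="\<lambda>_. 1", OF finite_mi[of k] each] by auto
    show "\<exists>C. \<forall>x\<in>K. \<forall>\<beta>. mi_order \<beta> \<le> k \<longrightarrow> norm (Dl l \<beta> x) \<le> C" using C by auto
  qed simp_all
qed

end

theorem mainTheorem11:
  fixes smul :: "'k::real_normed_field \<Rightarrow> 'e::ab_group_add \<Rightarrow> 'e"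
    and P :: "'a \<Rightarrow> 'e \<Rightarrow> real"
    and G :: "('e \<Rightarrow> 'k) set"
    and \<Omega> :: "(real^'n::finite) set"
    and k :: nat and \<gamma> :: real
  assumes "lcHs smul P" and "locally_complete smul P"
    and "linear_subspace_fun G" and "G \<subseteq> lc_dual smul P" and "determines_boundedness P G"
    and "open \<Omega>" and "0 < \<gamma>" and "\<gamma> \<le> 1"
  shows "(\<forall>f :: real^'n \<Rightarrow> 'e. (\<forall>l\<in>G. Ck_gamma_loc_scalar \<Omega> k \<gamma> (l \<circ> f)) \<longrightarrow> Ck_gamma_loc smul P \<Omega> k \<gamma> f)
       \<and> (\<forall>f :: real^'n \<Rightarrow> 'e. (\<forall>l\<in>G. Ck_scalar \<Omega> (Suc k) (l \<circ> f)) \<longrightarrow> Ck_gamma_loc smul P \<Omega> k 1 f)"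
proof -
  interpret L: lcs smul P G by (rule lcs.intro[OF assms(1,2,4,5)])
  show ?thesis using L.partA[OF assms(6,7,8)] L.partB[OF assms(6)] by blast
qed


end
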